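(* For every point $y\in GZ(\lambda)$ there exists a unique enhanced Gelfand--Zetlin pattern $P$ with top row $\lambda$ such that $y\in C_P$.
   Context: Let $\lambda=(\lambda_1\ge\dots\ge\lambda_n)$ be a partition. Coordinates $y_{ij}$ ($i,j\ge1$, $i+j\le n$) on $\mathbb{R}^{n(n-1)/2}$, with $y_{0j}=\lambda_{n+1-j}$; $GZ(\lambda)$ is defined by $y_{i-1,j}\le y_{ij}\le y_{i-1,j+1}$. A GZ pattern with top row $\lambda$ is an integer array $a_{ij}$, $0\le i\le n-1$, $1\le j\le n-i$, with $a_{0j}=\lambda_{n+1-j}$ and $a_{i-1,j}\le a_{ij}\le a_{i-1,j+1}$. An enhanced GZ pattern is such an array with encircled entries and edges (each joining $a_{ij}$, $i\ge1$, with $a_{i-1,j}$ or $a_{i-1,j+1}$) such that: (1) row $0$ entries are encircled; (2) joined entries are equal, the lower one encircled; (3) for $i\ge1$: both $a_{ij},a_{i,j+1}$ are joined to $a_{i-1,j+1}$ iff both are joined to $a_{i+1,j}$; (4) if $a_{0j}=a_{0,j+1}$ then $a_{1j}$ is encircled and joined to both; (5) if $a_{i-1,j}<a_{i-1,j+1}$ and $a_{ij}=a_{i-1,j}$, then $a_{ij}$ is encircled and joined to $a_{i-1,j}$; (6) if $a_{i-1,j}<a_{i-1,j+1}$, $a_{ij}=a_{i-1,j+1}$, $a_{ij}$ encircled, then joined to $a_{i-1,j+1}$; (7) if $a_{i-1,j}=a_{i-1,j+1}=a_{ij}$ and the two upper entries are connected by a path of edges, then $a_{ij}$ is encircled and joined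 to both; (8) if $a_{i-1,j}=a_{i-1,j+1}=a_{ij}$ and $a_{ij}$ is encircled, it is joined to at least one of them. Cell $C_P$: for each $i\ge1$ impose: if $a_{ij}$ is joined to $a_{i-1,j}$ (resp. $a_{i-1,j+1}$), then $y_{ij}=y_{i-1,j}$ (resp. $y_{ij}=y_{i-1,j+1}$); if no edge goes up from $a_{ij}$ and it is encircled, $y_{ij}=a_{ij}$; if no edge goes up and it is not encircled, impose $a_{ij}-1<y_{ij}$ if $a_{ij}-a_{i-1,j}\ge2$, else $y_{i-1,j}<y_{ij}$, and $y_{ij}<y_{i-1,j+1}$ if $a_{i-1,j+1}=a_{ij}$, else $y_{ij}<a_{ij}$. Let $\widehat{C_P}$ be the set so defined, $L$ its affine span, and $C_P=\widehat{C_P}\cap(GZ(\lambda)\cap L)^0$, where $(\cdot)^0$ is the relative interior in $L$. *)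

theory Defs
  imports Complex_Main
begin

text \<open>The partition is lam :: nat => int, with parts lam 1, ..., lam n.
  Points of R^(n(n-1)/2) are functions y :: nat => nat => real vanishing outside the
  index set {(i,j). i >= 1, j >= 1, i + j <= n}.\<close>

definition coord_dom :: "nat \<Rightarrow> nat \<Rightarrow> nat \<Rightarrow> bool" where
  "coord_dom n i j \<longleftrightarrow> 1 \<le> i \<and> 1 \<le> j \<and> i + j \<le> n"

definition pts :: "nat \<Rightarrow> (nat \<Rightarrow> nat \<Rightarrow> real) set" where
  "pts n = {y. \<forall>i j. \<not> coord_dom n i j \<longrightarrow> y i j = 0}"

definition ext :: "nat \<Rightarrow> (nat \<Rightarrow> int) \<Rightarrow> (nat \<Rightarrow> nat \<Rightarrow> real) \<Rightarrow> nat \<Rightarrow> nat \<Rightarrow> real" where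
  "ext n lam y i j = (if i = 0 then real_of_int (lam (n + 1 - j)) else y i j)"

definition GZ :: "nat \<Rightarrow> (nat \<Rightarrow> int) \<Rightarrow> (nat \<Rightarrow> nat \<Rightarrow> real) set" where
  "GZ n lam = {y \<in> pts n. \<forall>i j. coord_dom n i j \<longrightarrow>
      ext n lam y (i - 1) j \<le> y i j \<and> y i j \<le> ext n lam y (i - 1) (j + 1)}"

definition pat_dom :: "nat \<Rightarrow> nat \<Rightarrow> nat \<Rightarrow> bool" where
  "pat_dom n i j \<longleftrightarrow> 1 \<le> j \<and> i + j \<le> n"

text \<open>An enhanced pattern: entries, encircled entries, and edges.
  jl i j: a_{ij} is joined to a_{i-1,j};  jr i j: a_{ij} is joined to a_{i-1,j+1}.
  All data are normalised to be trivial outside the index set, so that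
  equality of patterns is HOL equality.\<close>
record epat =
  ent :: "nat \<Rightarrow> nat \<Rightarrow> int"
  circ :: "nat \<Rightarrow> nat \<Rightarrow> bool"
  jl :: "nat \<Rightarrow> nat \<Rightarrow> bool"
  jr :: "nat \<Rightarrow> nat \<Rightarrow> bool"

definition GZ_pattern :: "nat \<Rightarrow> (nat \<Rightarrow> int) \<Rightarrow> (nat \<Rightarrow> nat \<Rightarrow> int) \<Rightarrow> bool" where
  "GZ_pattern n lam a \<longleftrightarrow>
     (\<forall>i j. \<not> pat_dom n i j \<longrightarrow> a i j = 0) \<and>
     (\<forall>j. 1 \<le> j \<and> j \<le> n \<longrightarrow> a 0 j = lam (n + 1 - j)) \<and>
     (\<forall>i j. 1 \<le> i \<and> pat_dom n i j \<longrightarrow> a (i - 1) j \<le> a i j \<and> a i j \<le> a (i - 1) (j + 1))"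

definition edge_rel :: "epat \<Rightarrow> ((nat \<times> nat) \<times> (nat \<times> nat)) set" where
  "edge_rel P = {((i, j), (i - 1, j)) | i j. 1 \<le> i \<and> jl P i j}
              \<union> {((i, j), (i - 1, j + 1)) | i j. 1 \<le> i \<and> jr P i j}"

definition connected_by_path :: "epat \<Rightarrow> nat \<times> nat \<Rightarrow> nat \<times> nat \<Rightarrow> bool" where
  "connected_by_path P p q \<longleftrightarrow> (p, q) \<in> (edge_rel P \<union> (edge_rel P)\<inverse>)\<^sup>*"

definition enhanced_GZ :: "nat \<Rightarrow> (nat \<Rightarrow> int) \<Rightarrow> epat \<Rightarrow> bool" where
  "enhanced_GZ n lam P \<longleftrightarrow>
     (let a = ent P in
     GZ_pattern n lam a \<and>
     (\<forall>i j. \<not> pat_dom n i j \<longrightarrow> \<not> circ P i j) \<and>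
     (\<forall>i j. \<not> (1 \<le> i \<and> pat_dom n i j) \<longrightarrow> \<not> jl P i j \<and> \<not> jr P i j) \<and>
     \<comment> \<open>(1)\<close>
     (\<forall>j. pat_dom n 0 j \<longrightarrow> circ P 0 j) \<and>
     \<comment> \<open>(2)\<close>
     (\<forall>i j. jl P i j \<longrightarrow> a i j = a (i - 1) j \<and> circ P i j) \<and>
     (\<forall>i j. jr P i j \<longrightarrow> a i j = a (i - 1) (j + 1) \<and> circ P i j) \<and>
     \<comment> \<open>(3)\<close>
     (\<forall>i j. 1 \<le> i \<and> pat_dom n i (j + 1) \<and> 1 \<le> j \<longrightarrow>
        ((jr P i j \<and> jl P i (j + 1)) \<longleftrightarrow> (jl P (i + 1) j \<and> jr P (i + 1) j))) \<and>
     \<comment> \<open>(4)\<close>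
     (\<forall>j. 1 \<le> j \<and> j + 1 \<le> n \<and> a 0 j = a 0 (j + 1) \<longrightarrow>
        circ P 1 j \<and> jl P 1 j \<and> jr P 1 j) \<and>
     \<comment> \<open>(5)\<close>
     (\<forall>i j. 1 \<le> i \<and> pat_dom n i j \<and> a (i - 1) j < a (i - 1) (j + 1) \<and> a i j = a (i - 1) j
        \<longrightarrow> circ P i j \<and> jl P i j) \<and>
     \<comment> \<open>(6)\<close>
     (\<forall>i j. 1 \<le> i \<and> pat_dom n i j \<and> a (i - 1) j < a (i - 1) (j + 1) \<and>
        a i j = a (i - 1) (j + 1) \<and> circ P i j \<longrightarrow> jr P i j) \<and>
     \<comment> \<open>(7)\<close>
     (\<forall>i j. 1 \<le> i \<and> pat_dom n i j \<and> a (i - 1) j = a (i - 1) (j + 1) \<and> a i j = a (i - 1) j \<and>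
        connected_by_path P (i - 1, j) (i - 1, j + 1) \<longrightarrow> circ P i j \<and> jl P i j \<and> jr P i j) \<and>
     \<comment> \<open>(8)\<close>
     (\<forall>i j. 1 \<le> i \<and> pat_dom n i j \<and> a (i - 1) j = a (i - 1) (j + 1) \<and> a i j = a (i - 1) j \<and>
        circ P i j \<longrightarrow> jl P i j \<or> jr P i j))"

definition cell_hat :: "nat \<Rightarrow> (nat \<Rightarrow> int) \<Rightarrow> epat \<Rightarrow> (nat \<Rightarrow> nat \<Rightarrow> real) set" where
  "cell_hat n lam P = {y \<in> pts n. \<forall>i j. coord_dom n i j \<longrightarrow>
     (let a = ent P; Y = ext n lam y in
      (jl P i j \<longrightarrow> y i j = Y (i - 1) j) \<and>
      (jr P i j \<longrightarrow> y i j = Y (i - 1) (j + 1)) \<and>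
      (\<not> jl P i j \<and> \<not> jr P i j \<and> circ P i j \<longrightarrow> y i j = real_of_int (a i j)) \<and>
      (\<not> jl P i j \<and> \<not> jr P i j \<and> \<not> circ P i j \<longrightarrow>
         (if a i j - a (i - 1) j \<ge> 2 then real_of_int (a i j) - 1 < y i j else Y (i - 1) j < y i j) \<and>
         (if a (i - 1) (j + 1) = a i j then y i j < Y (i - 1) (j + 1) else y i j < real_of_int (a i j))))}"

definition aff_span :: "(nat \<Rightarrow> nat \<Rightarrow> real) set \<Rightarrow> (nat \<Rightarrow> nat \<Rightarrow> real) set" where
  "aff_span S = {y. \<exists>(m::nat) c v. (\<forall>k<m. v k \<in> S) \<and> (\<Sum>k<m. c k) = (1::real) \<and>
                     y = (\<lambda>i j. \<Sum>k<m. c k * v k i j)}"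

text \<open>Relative interior of S inside L (topology of coordinatewise / sup distance,
  equivalent to the Euclidean topology since only finitely many coordinates are nonzero).\<close>
definition rel_int_in :: "(nat \<Rightarrow> nat \<Rightarrow> real) set \<Rightarrow> (nat \<Rightarrow> nat \<Rightarrow> real) set \<Rightarrow> (nat \<Rightarrow> nat \<Rightarrow> real) set" where
  "rel_int_in L S = {x \<in> S. x \<in> L \<and> (\<exists>e>0. \<forall>z\<in>L. (\<forall>i j. \<bar>z i j - x i j\<bar> < e) \<longrightarrow> z \<in> S)}"

definition cell :: "nat \<Rightarrow> (nat \<Rightarrow> int) \<Rightarrow> epat \<Rightarrow> (nat \<Rightarrow> nat \<Rightarrow> real) set" where
  "cell n lam P = (let L = aff_span (cell_hat n lam P) in
                   cell_hat n lam P \<inter> rel_int_in L (GZ n lam \<inter> L))"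

end

theory Submission
  imports Defs
begin

definition isint :: "real \<Rightarrow> bool" where
  "isint v \<longleftrightarrow> real_of_int \<lfloor>v\<rfloor> = v"

definition cval :: "real \<Rightarrow> real \<Rightarrow> real \<Rightarrow> int \<Rightarrow> int \<Rightarrow> int" where
  "cval L R v Al Ar = (if v = L then Al else if v = R then Ar
     else if isint v \<and> real_of_int Al < v then \<lfloor>v\<rfloor>
     else if real_of_int Al + 1 > v then (if Al = Ar then Al else Al + 1)
     else \<lfloor>v\<rfloor> + 1)"

fun crow :: "nat \<Rightarrow> (nat \<Rightarrow> int) \<Rightarrow> (nat \<Rightarrow> nat \<Rightarrow> real) \<Rightarrow> nat \<Rightarrow> nat \<Rightarrow> int" where
  "crow n lam y 0 j = (if 1 \<le> j \<and> j \<le> n then lam (n + 1 - j) else 0)"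
| "crow n lam y (Suc i) j = (if pat_dom n (Suc i) j then
      cval (ext n lam y i j) (ext n lam y i (j + 1)) (y (Suc i) j) (crow n lam y i j) (crow n lam y i (j + 1))
     else 0)"

definition ccirc :: "nat \<Rightarrow> (nat \<Rightarrow> int) \<Rightarrow> (nat \<Rightarrow> nat \<Rightarrow> real) \<Rightarrow> nat \<Rightarrow> nat \<Rightarrow> bool" where
  "ccirc n lam y i j \<longleftrightarrow> pat_dom n i j \<and> (i = 0 \<or> y i j = ext n lam y (i - 1) j \<or> y i j = ext n lam y (i - 1) (j + 1)
      \<or> (isint (y i j) \<and> real_of_int (crow n lam y (i - 1) j) < y i j))"

definition canon :: "nat \<Rightarrow> (nat \<Rightarrow> int) \<Rightarrow> (nat \<Rightarrow> nat \<Rightarrow> real) \<Rightarrow> epat" where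
  "canon n lam y = \<lparr>ent = crow n lam y, circ = ccirc n lam y,
     jl = (\<lambda>i j. coord_dom n i j \<and> y i j = ext n lam y (i - 1) j),
     jr = (\<lambda>i j. coord_dom n i j \<and> y i j = ext n lam y (i - 1) (j + 1))\<rparr>"

lemma fin_eps:
  assumes "finite D" "\<forall>x\<in>D. \<exists>e>0. \<forall>t. B e t \<longrightarrow> Q x t"
    "\<And>e e' t. e \<le> e' \<Longrightarrow> B e t \<Longrightarrow> B e' t"
  shows "\<exists>e>(0::real). \<forall>t. B e t \<longrightarrow> (\<forall>x\<in>D. Q x t)"
  using assms(1,2)
proof (induction D rule: finite_induct)
  case empty
  then show ?case by (intro exI[of _ 1]) auto
next
  case (insert x F)
  then obtain e1 where e1: "e1 > 0" "\<forall>t. B e1 t \<longrightarrow> Q x t" by auto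
  from insert obtain e2 where e2: "e2 > 0" "\<forall>t. B e2 t \<longrightarrow> (\<forall>x\<in>F. Q x t)" by auto
  show ?case
  proof (intro exI[of _ "min e1 e2"] conjI allI impI)
    show "0 < min e1 e2" using e1 e2 by simp
    fix t assume "B (min e1 e2) t"
    then have "B e1 t" "B e2 t" using assms(3) by (metis min.cobounded1, metis min.cobounded2)
    then show "\<forall>x\<in>insert x F. Q x t" using e1 e2 by auto
  qed
qed

lemma finite_coord: "finite {(i, j). coord_dom n i j}"
proof -
  have "{(i, j). coord_dom n i j} \<subseteq> {..n} \<times> {..n}" by (auto simp: coord_dom_def)
  then show ?thesis by (rule finite_subset) auto
qed

locale gzs =
  fixes n :: nat and lam :: "nat \<Rightarrow> int" and y :: "nat \<Rightarrow> nat \<Rightarrow> real"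
  assumes partition: "\<forall>i. 1 \<le> i \<and> i < n \<longrightarrow> lam (i + 1) \<le> lam i"
      and yGZ: "y \<in> GZ n lam"
begin

abbreviation "Y \<equiv> ext n lam y"
abbreviation "A \<equiv> crow n lam y"

lemma Y0: "Y 0 j = real_of_int (lam (n + 1 - j))" by (simp add: ext_def)
lemma Ypos: "0 < i \<Longrightarrow> Y i j = y i j" by (simp add: ext_def)
lemma YSuc: "Y (Suc i) j = y (Suc i) j" by (simp add: ext_def)

lemma gz_lo: "coord_dom n i j \<Longrightarrow> Y (i - 1) j \<le> y i j"
  using yGZ by (auto simp: GZ_def)
lemma gz_hi: "coord_dom n i j \<Longrightarrow> y i j \<le> Y (i - 1) (j + 1)"
  using yGZ by (auto simp: GZ_def)
lemma y_pts: "y \<in> pts n" using yGZ by (auto simp: GZ_def)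

lemma A0: "1 \<le> j \<Longrightarrow> j \<le> n \<Longrightarrow> Y 0 j = real_of_int (A 0 j)"
  by (simp add: ext_def)

lemma lam_mono: "1 \<le> j \<Longrightarrow> j + 1 \<le> n \<Longrightarrow> lam (n + 1 - j) \<le> lam (n + 1 - (j + 1))"
proof -
  assume h: "1 \<le> j" "j + 1 \<le> n"
  have "lam ((n - j) + 1) \<le> lam (n - j)" using partition h by auto
  moreover have "n + 1 - j = (n - j) + 1" "n + 1 - (j + 1) = n - j" using h by auto
  ultimately show ?thesis by simp
qed

end

lemma cval_bounds:
  assumes "L \<le> v" "v \<le> R" "L \<le> real_of_int Al" "R \<le> real_of_int Ar" "Al \<le> Ar"
  shows "Al \<le> cval L R v Al Ar \<and> cval L R v Al Ar \<le> Ar \<and> v \<le> real_of_int (cval L R v Al Ar)"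
proof -
  have f1: "real_of_int \<lfloor>v\<rfloor> \<le> v" "v < real_of_int \<lfloor>v\<rfloor> + 1" by linarith+
  show ?thesis
  proof (cases "v = L")
    case True then show ?thesis using assms by (simp add: cval_def)
  next
    case nL: False
    show ?thesis
    proof (cases "v = R")
      case True then show ?thesis using assms nL by (simp add: cval_def)
    next
      case nR: False
      then have vR: "v < real_of_int Ar" using assms by linarith
      have vAr: "\<lfloor>v\<rfloor> < Ar" using vR f1 by linarith
      show ?thesis
      proof (cases "isint v \<and> real_of_int Al < v")
        case True then show ?thesis using assms nL nR vR by (auto simp: cval_def isint_def)
      next
        case nC: False
        show ?thesis
        proof (cases "real_of_int Al + 1 > v")
          case True then show ?thesis using assms nL nR nC vR by (auto simp: cval_def)
        next
          case False
          then have "Al + 1 \<le> \<lfloor>v\<rfloor>" by linarith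
          moreover have "cval L R v Al Ar = \<lfloor>v\<rfloor> + 1" using nL nR nC False by (simp add: cval_def)
          ultimately show ?thesis using assms vAr f1 by simp
        qed
      qed
    qed
  qed
qed

context gzs begin

lemma coord_Suc: "coord_dom n (Suc i) j \<Longrightarrow> pat_dom n i j \<and> pat_dom n i (j + 1) \<and> pat_dom n (Suc i) j \<and> 1 \<le> j"
  by (auto simp: coord_dom_def pat_dom_def)

lemma A_Suc: "coord_dom n (Suc i) j \<Longrightarrow>
  A (Suc i) j = cval (Y i j) (Y i (j + 1)) (y (Suc i) j) (A i j) (A i (j + 1))"
  by (simp add: coord_dom_def pat_dom_def)

definition inv :: "nat \<Rightarrow> bool" where
  "inv i \<longleftrightarrow> (\<forall>j. pat_dom n i j \<longrightarrow> Y i j \<le> real_of_int (A i j)) \<and>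
     (\<forall>j. 1 \<le> j \<and> pat_dom n i (j + 1) \<longrightarrow> A i j \<le> A i (j + 1))"

lemma bounds_from_inv:
  assumes "inv i" "coord_dom n (Suc i) j"
  shows "A i j \<le> A (Suc i) j \<and> A (Suc i) j \<le> A i (j + 1) \<and> y (Suc i) j \<le> real_of_int (A (Suc i) j)"
proof -
  note c = coord_Suc[OF assms(2)]
  have "Y i j \<le> y (Suc i) j" "y (Suc i) j \<le> Y i (j + 1)"
    using gz_lo[OF assms(2)] gz_hi[OF assms(2)] by simp_all
  moreover have "Y i j \<le> real_of_int (A i j)" "Y i (j + 1) \<le> real_of_int (A i (j + 1))" "A i j \<le> A i (j + 1)"
    using assms(1) c by (auto simp: inv_def)
  ultimately show ?thesis using cval_bounds A_Suc[OF assms(2)] by simp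
qed

lemma inv_all: "inv i"
proof (induction i)
  case 0
  show ?case unfolding inv_def
  proof (intro conjI allI impI)
    fix j assume "pat_dom n 0 j" then show "Y 0 j \<le> real_of_int (A 0 j)" by (simp add: pat_dom_def ext_def)
  next
    fix j assume "1 \<le> j \<and> pat_dom n 0 (j + 1)"
    then show "A 0 j \<le> A 0 (j + 1)" using lam_mono[of j] by (simp add: pat_dom_def)
  qed
next
  case (Suc i)
  show ?case unfolding inv_def
  proof (intro conjI allI impI)
    fix j assume h: "pat_dom n (Suc i) j"
    then have "coord_dom n (Suc i) j" by (simp add: pat_dom_def coord_dom_def)
    then show "Y (Suc i) j \<le> real_of_int (A (Suc i) j)" using bounds_from_inv[OF Suc.IH] YSuc by simp
  next
    fix j assume h: "1 \<le> j \<and> pat_dom n (Suc i) (j + 1)"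
    then have "coord_dom n (Suc i) j" "coord_dom n (Suc i) (j + 1)" by (auto simp: pat_dom_def coord_dom_def)
    then show "A (Suc i) j \<le> A (Suc i) (j + 1)"
      using bounds_from_inv[OF Suc.IH, of j] bounds_from_inv[OF Suc.IH, of "j + 1"] by linarith
  qed
qed

lemma bounds: "coord_dom n (Suc i) j \<Longrightarrow>
   A i j \<le> A (Suc i) j \<and> A (Suc i) j \<le> A i (j + 1) \<and> y (Suc i) j \<le> real_of_int (A (Suc i) j)"
  using bounds_from_inv inv_all by blast

lemma Y_le_A: "pat_dom n i j \<Longrightarrow> Y i j \<le> real_of_int (A i j)"
  using inv_all by (auto simp: inv_def)

lemma A_mono: "1 \<le> j \<Longrightarrow> pat_dom n i (j + 1) \<Longrightarrow> A i j \<le> A i (j + 1)"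
  using inv_all by (auto simp: inv_def)

end


context gzs begin

lemma coord_prev: "coord_dom n (Suc (Suc k)) j \<Longrightarrow> coord_dom n (Suc k) j \<and> coord_dom n (Suc k) (j + 1)"
  by (auto simp: coord_dom_def)

lemma K_all: "\<forall>j. coord_dom n (Suc i) j \<longrightarrow>
   (y (Suc i) j = Y i j \<longrightarrow> A (Suc i) j = A i j) \<and> (y (Suc i) j = Y i (j + 1) \<longrightarrow> A (Suc i) j = A i (j + 1))"
proof (induction i)
  case 0
  show ?case
  proof (intro allI impI conjI)
    fix j assume c: "coord_dom n (Suc 0) j"
    then have jn: "1 \<le> j" "j + 1 \<le> n" by (auto simp: coord_dom_def)
    show "y (Suc 0) j = Y 0 j \<Longrightarrow> A (Suc 0) j = A 0 j" using A_Suc[OF c] by (simp add: cval_def)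
    assume r: "y (Suc 0) j = Y 0 (j + 1)"
    show "A (Suc 0) j = A 0 (j + 1)"
    proof (cases "y (Suc 0) j = Y 0 j")
      case True
      then have "real_of_int (A 0 j) = real_of_int (A 0 (j + 1))" using r A0[of j] A0[of "j+1"] jn by simp
      then show ?thesis using A_Suc[OF c] True by (simp add: cval_def)
    next
      case False then show ?thesis using A_Suc[OF c] r by (simp add: cval_def)
    qed
  qed
next
  case (Suc k)
  show ?case
  proof (intro allI impI conjI)
    fix j assume c: "coord_dom n (Suc (Suc k)) j"
    show "y (Suc (Suc k)) j = Y (Suc k) j \<Longrightarrow> A (Suc (Suc k)) j = A (Suc k) j" using A_Suc[OF c] by (simp add: cval_def)
    assume r: "y (Suc (Suc k)) j = Y (Suc k) (j + 1)"
    show "A (Suc (Suc k)) j = A (Suc k) (j + 1)"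
    proof (cases "y (Suc (Suc k)) j = Y (Suc k) j")
      case True
      note cp = coord_prev[OF c]
      have e1: "y (Suc k) j = y (Suc k) (j + 1)" using True r YSuc by simp
      have "y (Suc k) j \<le> Y k (j + 1)" using gz_hi[of "Suc k" j] cp by simp
      moreover have "Y k (j + 1) \<le> y (Suc k) (j + 1)" using gz_lo[of "Suc k" "j + 1"] cp by simp
      ultimately have t1: "y (Suc k) j = Y k (j + 1)" and t2: "y (Suc k) (j + 1) = Y k (j + 1)" using e1 by linarith+
      have "A (Suc k) j = A k (j + 1)" using Suc.IH cp t1 by blast
      moreover have "A (Suc k) (j + 1) = A k (j + 1)" using Suc.IH cp t2 by fastforce
      ultimately show ?thesis using A_Suc[OF c] True by (simp add: cval_def)
    next
      case False then show ?thesis using A_Suc[OF c] r by (simp add: cval_def)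
    qed
  qed
qed

lemma K_left: "coord_dom n (Suc i) j \<Longrightarrow> y (Suc i) j = Y i j \<Longrightarrow> A (Suc i) j = A i j"
  using K_all by blast
lemma K_right: "coord_dom n (Suc i) j \<Longrightarrow> y (Suc i) j = Y i (j + 1) \<Longrightarrow> A (Suc i) j = A i (j + 1)"
  using K_all by blast

end


lemma cval_b3: "v \<noteq> L \<Longrightarrow> v \<noteq> R \<Longrightarrow> isint v \<Longrightarrow> real_of_int Al < v \<Longrightarrow> cval L R v Al Ar = \<lfloor>v\<rfloor>"
  by (simp add: cval_def)

lemma cval_ne: "v \<noteq> L \<Longrightarrow> v \<noteq> R \<Longrightarrow> Al \<noteq> Ar \<Longrightarrow> cval L R v Al Ar \<noteq> Al"
proof -
  assume h: "v \<noteq> L" "v \<noteq> R" "Al \<noteq> Ar"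
  have f1: "real_of_int \<lfloor>v\<rfloor> \<le> v" by linarith
  show ?thesis
  proof (cases "isint v \<and> real_of_int Al < v")
    case True
    then have "cval L R v Al Ar = \<lfloor>v\<rfloor>" using h by (simp add: cval_def)
    moreover have "real_of_int Al < real_of_int \<lfloor>v\<rfloor>" using True unfolding isint_def by metis
    ultimately show ?thesis by simp
  next
    case nC: False
    show ?thesis
    proof (cases "real_of_int Al + 1 > v")
      case True then show ?thesis using h nC by (auto simp: cval_def)
    next
      case False
      then have "Al + 1 \<le> \<lfloor>v\<rfloor>" by linarith
      then show ?thesis using h nC False by (simp add: cval_def)
    qed
  qed
qed

lemma rtrancl_eq: "(p, q) \<in> R\<^sup>* \<Longrightarrow> (\<forall>(a, b)\<in>R. f a = f b) \<Longrightarrow> f p = f q"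
  by (induction rule: rtrancl_induct) auto

context gzs begin

abbreviation "P0 \<equiv> canon n lam y"

lemma path_eq:
  assumes "connected_by_path P0 p q"
  shows "Y (fst p) (snd p) = Y (fst q) (snd q)"
proof -
  have "\<forall>(a, b)\<in>(edge_rel P0 \<union> (edge_rel P0)\<inverse>). (\<lambda>p. Y (fst p) (snd p)) a = (\<lambda>p. Y (fst p) (snd p)) b"
    by (auto simp: edge_rel_def canon_def ext_def)
  then show ?thesis using assms rtrancl_eq[of p q _ "\<lambda>p. Y (fst p) (snd p)"]
    unfolding connected_by_path_def by blast
qed

lemma squeeze:
  assumes "coord_dom n (Suc k) j" "Y k j = Y k (j + 1)"
  shows "y (Suc k) j = Y k j \<and> y (Suc k) j = Y k (j + 1)"
  using gz_lo[OF assms(1)] gz_hi[OF assms(1)] assms(2) by simp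

lemma canon_GZ_pattern: "GZ_pattern n lam A"
proof -
  have 1: "\<forall>i j. \<not> pat_dom n i j \<longrightarrow> A i j = 0"
  proof (intro allI impI)
    fix i j assume "\<not> pat_dom n i j" then show "A i j = 0"
      by (cases i) (auto simp: pat_dom_def)
  qed
  have 2: "\<forall>j. 1 \<le> j \<and> j \<le> n \<longrightarrow> A 0 j = lam (n + 1 - j)" by simp
  have 3: "\<forall>i j. 1 \<le> i \<and> pat_dom n i j \<longrightarrow> A (i - 1) j \<le> A i j \<and> A i j \<le> A (i - 1) (j + 1)"
  proof (intro allI impI)
    fix i j assume h: "1 \<le> i \<and> pat_dom n i j"
    then obtain k where k: "i = Suc k" by (cases i) auto
    then have "coord_dom n (Suc k) j" using h by (simp add: pat_dom_def coord_dom_def)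
    then show "A (i - 1) j \<le> A i j \<and> A i j \<le> A (i - 1) (j + 1)" using bounds k by simp
  qed
  show ?thesis unfolding GZ_pattern_def using 1 2 3 by blast
qed

lemma canon_enh: "enhanced_GZ n lam P0"
proof -
  have c2l: "\<forall>i j. jl P0 i j \<longrightarrow> ent P0 i j = ent P0 (i - 1) j \<and> circ P0 i j"
  proof (intro allI impI)
    fix i j assume h: "jl P0 i j"
    then obtain k where k: "i = Suc k" and c: "coord_dom n (Suc k) j" and t: "y (Suc k) j = Y k j"
      by (cases i) (auto simp: canon_def coord_dom_def)
    then show "ent P0 i j = ent P0 (i - 1) j \<and> circ P0 i j"
      using K_left[OF c t] by (auto simp: canon_def ccirc_def coord_dom_def pat_dom_def)
  qed
  have c2r: "\<forall>i j. jr P0 i j \<longrightarrow> ent P0 i j = ent P0 (i - 1) (j + 1) \<and> circ P0 i j"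
  proof (intro allI impI)
    fix i j assume h: "jr P0 i j"
    then obtain k where k: "i = Suc k" and c: "coord_dom n (Suc k) j" and t: "y (Suc k) j = Y k (j + 1)"
      by (cases i) (auto simp: canon_def coord_dom_def)
    then show "ent P0 i j = ent P0 (i - 1) (j + 1) \<and> circ P0 i j"
      using K_right[OF c t] by (auto simp: canon_def ccirc_def coord_dom_def pat_dom_def)
  qed
  have c3: "\<forall>i j. 1 \<le> i \<and> pat_dom n i (j + 1) \<and> 1 \<le> j \<longrightarrow>
        ((jr P0 i j \<and> jl P0 i (j + 1)) \<longleftrightarrow> (jl P0 (i + 1) j \<and> jr P0 (i + 1) j))"
  proof (intro allI impI)
    fix i j assume h: "1 \<le> i \<and> pat_dom n i (j + 1) \<and> 1 \<le> j"
    then have d1: "coord_dom n i j" "coord_dom n i (j + 1)" "coord_dom n (i + 1) j"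
      by (auto simp: pat_dom_def coord_dom_def)
    have a1: "y i j \<le> Y (i - 1) (j + 1)" "Y (i - 1) (j + 1) \<le> y i (j + 1)"
      using gz_hi[OF d1(1)] gz_lo[OF d1(2)] by simp_all
    have a2: "Y i j \<le> y (i + 1) j" "y (i + 1) j \<le> Y i (j + 1)"
      using gz_lo[OF d1(3)] gz_hi[OF d1(3)] by simp_all
    have "Y i j = y i j" "Y i (j + 1) = y i (j + 1)" using h by (simp_all add: ext_def)
    then show "(jr P0 i j \<and> jl P0 i (j + 1)) \<longleftrightarrow> (jl P0 (i + 1) j \<and> jr P0 (i + 1) j)"
      using a1 a2 d1 by (auto simp: canon_def)
  qed
  have c4: "\<forall>j. 1 \<le> j \<and> j + 1 \<le> n \<and> ent P0 0 j = ent P0 0 (j + 1) \<longrightarrow>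
        circ P0 1 j \<and> jl P0 1 j \<and> jr P0 1 j"
  proof (intro allI impI)
    fix j assume h: "1 \<le> j \<and> j + 1 \<le> n \<and> ent P0 0 j = ent P0 0 (j + 1)"
    then have c: "coord_dom n (Suc 0) j" by (simp add: coord_dom_def)
    have e: "A 0 j = A 0 (j + 1)" using h by (simp add: canon_def del: crow.simps)
    have y1: "Y 0 j = real_of_int (A 0 j)" using h by (intro A0) auto
    have y2: "Y 0 (j + 1) = real_of_int (A 0 (j + 1))" using h by (intro A0) auto
    have "Y 0 j = Y 0 (j + 1)" using y1 y2 e by metis
    then have "y (Suc 0) j = Y 0 j \<and> y (Suc 0) j = Y 0 (j + 1)" using squeeze[OF c] by simp
    then show "circ P0 1 j \<and> jl P0 1 j \<and> jr P0 1 j" using c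
      by (simp add: canon_def ccirc_def coord_dom_def pat_dom_def)
  qed
  have c5: "\<forall>i j. 1 \<le> i \<and> pat_dom n i j \<and> ent P0 (i - 1) j < ent P0 (i - 1) (j + 1) \<and> ent P0 i j = ent P0 (i - 1) j
        \<longrightarrow> circ P0 i j \<and> jl P0 i j"
  proof (intro allI impI)
    fix i j assume h: "1 \<le> i \<and> pat_dom n i j \<and> ent P0 (i - 1) j < ent P0 (i - 1) (j + 1) \<and> ent P0 i j = ent P0 (i - 1) j"
    then obtain k where k: "i = Suc k" by (cases i) auto
    then have c: "coord_dom n (Suc k) j" using h by (simp add: pat_dom_def coord_dom_def)
    have lt: "A k j < A k (j + 1)" "A (Suc k) j = A k j" using h k by (simp_all add: canon_def del: crow.simps)
    have "y (Suc k) j = Y k j"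
    proof (rule ccontr)
      assume nl: "y (Suc k) j \<noteq> Y k j"
      show False
      proof (cases "y (Suc k) j = Y k (j + 1)")
        case True then show False using K_right[OF c True] lt by simp
      next
        case False then show False using cval_ne[OF nl False, of "A k j" "A k (j + 1)"] A_Suc[OF c] lt by simp
      qed
    qed
    then show "circ P0 i j \<and> jl P0 i j" using c k by (simp add: canon_def ccirc_def coord_dom_def pat_dom_def)
  qed
  have c6: "\<forall>i j. 1 \<le> i \<and> pat_dom n i j \<and> ent P0 (i - 1) j < ent P0 (i - 1) (j + 1) \<and>
        ent P0 i j = ent P0 (i - 1) (j + 1) \<and> circ P0 i j \<longrightarrow> jr P0 i j"
  proof (intro allI impI)
    fix i j assume h: "1 \<le> i \<and> pat_dom n i j \<and> ent P0 (i - 1) j < ent P0 (i - 1) (j + 1) \<and>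
        ent P0 i j = ent P0 (i - 1) (j + 1) \<and> circ P0 i j"
    then obtain k where k: "i = Suc k" by (cases i) auto
    then have c: "coord_dom n (Suc k) j" using h by (simp add: pat_dom_def coord_dom_def)
    have lt: "A k j < A k (j + 1)" "A (Suc k) j = A k (j + 1)" "ccirc n lam y (Suc k) j" using h k by (simp_all add: canon_def del: crow.simps)
    have "y (Suc k) j = Y k (j + 1)"
    proof (rule ccontr)
      assume nr: "y (Suc k) j \<noteq> Y k (j + 1)"
      show False
      proof (cases "y (Suc k) j = Y k j")
        case True then show False using K_left[OF c True] lt by simp
      next
        case False
        then have b3: "isint (y (Suc k) j)" "real_of_int (A k j) < y (Suc k) j"
          using lt(3) nr by (auto simp: ccirc_def)
        have "A (Suc k) j = \<lfloor>y (Suc k) j\<rfloor>" using A_Suc[OF c] cval_b3[OF False nr b3] by simp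
        moreover have "y (Suc k) j < Y k (j + 1)" using gz_hi[OF c] nr by simp
        moreover have "Y k (j + 1) \<le> A k (j + 1)" using Y_le_A coord_Suc[OF c] by blast
        ultimately show False using lt b3 by (simp add: isint_def)
      qed
    qed
    then show "jr P0 i j" using c k by (simp add: canon_def)
  qed
  have c7: "\<forall>i j. 1 \<le> i \<and> pat_dom n i j \<and> ent P0 (i - 1) j = ent P0 (i - 1) (j + 1) \<and> ent P0 i j = ent P0 (i - 1) j \<and>
        connected_by_path P0 (i - 1, j) (i - 1, j + 1) \<longrightarrow> circ P0 i j \<and> jl P0 i j \<and> jr P0 i j"
  proof (intro allI impI)
    fix i j assume h: "1 \<le> i \<and> pat_dom n i j \<and> ent P0 (i - 1) j = ent P0 (i - 1) (j + 1) \<and> ent P0 i j = ent P0 (i - 1) j \<and>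
        connected_by_path P0 (i - 1, j) (i - 1, j + 1)"
    then obtain k where k: "i = Suc k" by (cases i) auto
    then have c: "coord_dom n (Suc k) j" using h by (simp add: pat_dom_def coord_dom_def)
    have "Y k j = Y k (j + 1)" using path_eq h k by fastforce
    then have "y (Suc k) j = Y k j \<and> y (Suc k) j = Y k (j + 1)" using squeeze[OF c] by simp
    then show "circ P0 i j \<and> jl P0 i j \<and> jr P0 i j" using c k
      by (simp add: canon_def ccirc_def coord_dom_def pat_dom_def)
  qed
  have c8: "\<forall>i j. 1 \<le> i \<and> pat_dom n i j \<and> ent P0 (i - 1) j = ent P0 (i - 1) (j + 1) \<and> ent P0 i j = ent P0 (i - 1) j \<and>
        circ P0 i j \<longrightarrow> jl P0 i j \<or> jr P0 i j"
  proof (intro allI impI)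
    fix i j assume h: "1 \<le> i \<and> pat_dom n i j \<and> ent P0 (i - 1) j = ent P0 (i - 1) (j + 1) \<and> ent P0 i j = ent P0 (i - 1) j \<and>
        circ P0 i j"
    then obtain k where k: "i = Suc k" by (cases i) auto
    then have c: "coord_dom n (Suc k) j" using h by (simp add: pat_dom_def coord_dom_def)
    have lt: "A (Suc k) j = A k j" "ccirc n lam y (Suc k) j" using h k by (simp_all add: canon_def del: crow.simps)
    show "jl P0 i j \<or> jr P0 i j"
    proof (rule ccontr)
      assume "\<not> (jl P0 i j \<or> jr P0 i j)"
      then have nl: "y (Suc k) j \<noteq> Y k j" and nr: "y (Suc k) j \<noteq> Y k (j + 1)" using c k by (auto simp: canon_def)
      then have b3: "isint (y (Suc k) j)" "real_of_int (A k j) < y (Suc k) j"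
        using lt(2) by (auto simp: ccirc_def)
      have "A (Suc k) j = \<lfloor>y (Suc k) j\<rfloor>" using A_Suc[OF c] cval_b3[OF nl nr b3] by simp
      then show False using lt b3 by (simp add: isint_def)
    qed
  qed
  show ?thesis
    unfolding enhanced_GZ_def Let_def
    apply (intro conjI)
    subgoal using canon_GZ_pattern by (simp add: canon_def)
    subgoal by (simp add: canon_def ccirc_def)
    subgoal by (auto simp: canon_def coord_dom_def pat_dom_def)
    subgoal by (simp add: canon_def ccirc_def)
    subgoal using c2l by blast
    subgoal using c2r by blast
    subgoal using c3 by blast
    subgoal using c4 by blast
    subgoal using c5 by blast
    subgoal using c6 by blast
    subgoal using c7 by blast
    subgoal using c8 by blast
    done
qed

end


lemma cval_open:
  assumes "L \<le> v" "v \<le> R" "v \<noteq> L" "v \<noteq> R" "\<not> (isint v \<and> real_of_int Al < v)" "R \<le> real_of_int Ar" "Al \<le> Ar"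
  shows "(if cval L R v Al Ar - Al \<ge> 2 then real_of_int (cval L R v Al Ar) - 1 < v else L < v) \<and>
         (if Ar = cval L R v Al Ar then v < R else v < real_of_int (cval L R v Al Ar))"
proof -
  have f1: "real_of_int \<lfloor>v\<rfloor> \<le> v" "v < real_of_int \<lfloor>v\<rfloor> + 1" by linarith+
  have LR: "L < v" "v < R" using assms by linarith+
  show ?thesis
  proof (cases "real_of_int Al + 1 > v")
    case True
    then have c: "cval L R v Al Ar = (if Al = Ar then Al else Al + 1)" using assms by (auto simp: cval_def)
    show ?thesis
    proof (cases "Al = Ar")
      case True then show ?thesis using c LR by simp
    next
      case False then show ?thesis using c LR \<open>real_of_int Al + 1 > v\<close> by simp
    qed
  next
    case False
    then have c: "cval L R v Al Ar = \<lfloor>v\<rfloor> + 1" using assms by (auto simp: cval_def)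
    have ni: "real_of_int \<lfloor>v\<rfloor> \<noteq> v" using assms(5) False unfolding isint_def by auto
    have fl: "real_of_int \<lfloor>v\<rfloor> < v" using ni f1 by linarith
    then show ?thesis using c LR f1 by auto
  qed
qed

lemma ext_aff:
  assumes "(\<Sum>k<m. c k) = (1::real)"
  shows "ext n lam (\<lambda>i j. \<Sum>k<m. c k * v k i j) p q = (\<Sum>k<m. c k * ext n lam (v k) p q)"
proof (cases "p = 0")
  case True
  have "(\<Sum>k<m. c k * real_of_int (lam (n + 1 - q))) = (\<Sum>k<m. c k) * real_of_int (lam (n + 1 - q))"
    by (simp add: sum_distrib_right)
  then show ?thesis using True assms by (simp add: ext_def)
next
  case False then show ?thesis by (simp add: ext_def)
qed

lemma aff_eqs:
  assumes "z \<in> aff_span (cell_hat n lam P)"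
  shows "z \<in> pts n \<and> (\<forall>i j. coord_dom n i j \<and> jl P i j \<longrightarrow> z i j = ext n lam z (i - 1) j) \<and>
                      (\<forall>i j. coord_dom n i j \<and> jr P i j \<longrightarrow> z i j = ext n lam z (i - 1) (j + 1))"
proof -
  obtain m :: nat and c v where h: "\<forall>k<m. v k \<in> cell_hat n lam P" "(\<Sum>k<m. c k) = (1::real)"
    "z = (\<lambda>i j. \<Sum>k<m. c k * v k i j)" using assms unfolding aff_span_def mem_Collect_eq by blast
  have vp: "\<And>k. k < m \<Longrightarrow> v k \<in> pts n" using h(1) unfolding cell_hat_def by blast
  have vl: "\<And>k i j. k < m \<Longrightarrow> coord_dom n i j \<Longrightarrow> jl P i j \<Longrightarrow> v k i j = ext n lam (v k) (i - 1) j"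
    using h(1) unfolding cell_hat_def Let_def by blast
  have vr: "\<And>k i j. k < m \<Longrightarrow> coord_dom n i j \<Longrightarrow> jr P i j \<Longrightarrow> v k i j = ext n lam (v k) (i - 1) (j + 1)"
    using h(1) unfolding cell_hat_def Let_def by blast
  have "z \<in> pts n" using vp unfolding h(3) pts_def by auto
  moreover have "\<forall>i j. coord_dom n i j \<and> jl P i j \<longrightarrow> z i j = ext n lam z (i - 1) j"
  proof (intro allI impI)
    fix i j assume a: "coord_dom n i j \<and> jl P i j"
    have "ext n lam z (i - 1) j = (\<Sum>k<m. c k * ext n lam (v k) (i - 1) j)" unfolding h(3) by (rule ext_aff[OF h(2)])
    also have "\<dots> = (\<Sum>k<m. c k * v k i j)" using vl a by (intro sum.cong) auto
    finally show "z i j = ext n lam z (i - 1) j" unfolding h(3) by simp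
  qed
  moreover have "\<forall>i j. coord_dom n i j \<and> jr P i j \<longrightarrow> z i j = ext n lam z (i - 1) (j + 1)"
  proof (intro allI impI)
    fix i j assume a: "coord_dom n i j \<and> jr P i j"
    have "ext n lam z (i - 1) (j + 1) = (\<Sum>k<m. c k * ext n lam (v k) (i - 1) (j + 1))" unfolding h(3) by (rule ext_aff[OF h(2)])
    also have "\<dots> = (\<Sum>k<m. c k * v k i j)" using vr a by (intro sum.cong) auto
    finally show "z i j = ext n lam z (i - 1) (j + 1)" unfolding h(3) by simp
  qed
  ultimately show ?thesis by blast
qed

lemma self_aff: "x \<in> S \<Longrightarrow> x \<in> aff_span S"
  unfolding aff_span_def
  by (rule CollectI, rule exI[of _ 1], rule exI[of _ "\<lambda>_. 1"], rule exI[of _ "\<lambda>_. x"]) auto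

lemma close_ineq: "\<bar>a - b\<bar> < (d - b) / 2 \<Longrightarrow> \<bar>c - d\<bar> < (d - (b::real)) / 2 \<Longrightarrow> a \<le> c"
proof -
  assume h: "\<bar>a - b\<bar> < (d - b) / 2" "\<bar>c - d\<bar> < (d - b) / 2"
  have "a - b \<le> \<bar>a - b\<bar>" "d - c \<le> \<bar>c - d\<bar>" by auto
  then show ?thesis using h by (simp add: field_simps)
qed

lemma close_ineq2: "\<bar>a - b\<bar> < (b - d) / 2 \<Longrightarrow> \<bar>c - d\<bar> < (b - (d::real)) / 2 \<Longrightarrow> c \<le> a"
proof -
  assume h: "\<bar>a - b\<bar> < (b - d) / 2" "\<bar>c - d\<bar> < (b - d) / 2"
  have "b - a \<le> \<bar>a - b\<bar>" "c - d \<le> \<bar>c - d\<bar>" by auto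
  then show ?thesis using h by (simp add: field_simps)
qed

lemma ext_close: "e > 0 \<Longrightarrow> \<forall>i j. \<bar>z i j - y i j\<bar> < e \<Longrightarrow> \<bar>ext n lam z p q - ext n lam y p q\<bar> < e"
  by (simp add: ext_def)

context gzs begin

lemma canon_hat: "y \<in> cell_hat n lam P0"
  unfolding cell_hat_def Let_def
proof (intro CollectI conjI allI impI y_pts)
  fix i j assume c0: "coord_dom n i j"
  then obtain k where k: "i = Suc k" by (cases i) (auto simp: coord_dom_def)
  then have c: "coord_dom n (Suc k) j" using c0 by simp
  note cs = coord_Suc[OF c]
  let ?v = "y (Suc k) j"
  show "jl P0 i j \<Longrightarrow> y i j = ext n lam y (i - 1) j" by (simp add: canon_def)
  show "jr P0 i j \<Longrightarrow> y i j = ext n lam y (i - 1) (j + 1)" by (simp add: canon_def)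
  show "\<not> jl P0 i j \<and> \<not> jr P0 i j \<and> circ P0 i j \<Longrightarrow> y i j = real_of_int (ent P0 i j)"
  proof -
    assume h: "\<not> jl P0 i j \<and> \<not> jr P0 i j \<and> circ P0 i j"
    then have nl: "?v \<noteq> Y k j" and nr: "?v \<noteq> Y k (j + 1)" using c k by (auto simp: canon_def)
    then have b3: "isint ?v" "real_of_int (A k j) < ?v" using h k by (auto simp: canon_def ccirc_def)
    have "A (Suc k) j = \<lfloor>?v\<rfloor>" using A_Suc[OF c] cval_b3[OF nl nr b3] by simp
    moreover have fl: "real_of_int \<lfloor>?v\<rfloor> = ?v" using b3(1) unfolding isint_def .
    moreover have e1: "ent P0 i j = A (Suc k) j" using k by (simp add: canon_def del: crow.simps)
    ultimately show ?thesis using k by metis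
  qed
  have opn: "\<not> jl P0 i j \<and> \<not> jr P0 i j \<and> \<not> circ P0 i j \<Longrightarrow>
    (if 2 \<le> ent P0 i j - ent P0 (i - 1) j then real_of_int (ent P0 i j) - 1 < y i j
     else ext n lam y (i - 1) j < y i j) \<and>
    (if ent P0 (i - 1) (j + 1) = ent P0 i j then y i j < ext n lam y (i - 1) (j + 1)
     else y i j < real_of_int (ent P0 i j))"
  proof -
    assume h: "\<not> jl P0 i j \<and> \<not> jr P0 i j \<and> \<not> circ P0 i j"
    then have nl: "?v \<noteq> Y k j" and nr: "?v \<noteq> Y k (j + 1)" using c k by (auto simp: canon_def)
    then have nb3: "\<not> (isint ?v \<and> real_of_int (A k j) < ?v)" using h k cs by (auto simp: canon_def ccirc_def)
    have YA: "Y k (j + 1) \<le> real_of_int (A k (j + 1))" using Y_le_A cs by blast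
    have AM: "A k j \<le> A k (j + 1)" using A_mono cs by blast
    have lo: "Y k j \<le> ?v" using gz_lo[OF c] by simp
    have hi: "?v \<le> Y k (j + 1)" using gz_hi[OF c] by simp
    note fact = cval_open[OF lo hi nl nr nb3 YA AM]
    have entP0: "ent P0 = A" by (simp add: canon_def)
    have sk: "Suc k - 1 = k" by simp
    show ?thesis unfolding k sk entP0 A_Suc[OF c] using fact .
  qed
  show "\<not> jl P0 i j \<and> \<not> jr P0 i j \<and> \<not> circ P0 i j \<Longrightarrow>
    (if 2 \<le> ent P0 i j - ent P0 (i - 1) j then real_of_int (ent P0 i j) - 1 < y i j
     else ext n lam y (i - 1) j < y i j)" using opn by blast
  show "\<not> jl P0 i j \<and> \<not> jr P0 i j \<and> \<not> circ P0 i j \<Longrightarrow>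
    (if ent P0 (i - 1) (j + 1) = ent P0 i j then y i j < ext n lam y (i - 1) (j + 1)
     else y i j < real_of_int (ent P0 i j))" using opn by blast
qed

lemma canon_cell: "y \<in> cell n lam P0"
proof -
  let ?L = "aff_span (cell_hat n lam P0)"
  have yL: "y \<in> ?L" using self_aff canon_hat by blast
  define D where "D = {(i, j). coord_dom n i j} \<times> (UNIV :: bool set)"
  have fD: "finite D" unfolding D_def using finite_coord by simp
  define B where "B = (\<lambda>e z. z \<in> ?L \<and> (\<forall>i j. \<bar>z i j - y i j\<bar> < e))"
  define Q where "Q = (\<lambda>(x :: (nat \<times> nat) \<times> bool) z. case x of ((i, j), b) \<Rightarrow>
     (if b then ext n lam z (i - 1) j \<le> z i j else z i j \<le> ext n lam z (i - 1) (j + 1)))"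
  have "\<forall>x\<in>D. \<exists>e>0. \<forall>t. B e t \<longrightarrow> Q x t"
  proof
    fix x assume "x \<in> D"
    then obtain i j b where x: "x = ((i, j), b)" and c: "coord_dom n i j" unfolding D_def by auto
    show "\<exists>e>0. \<forall>t. B e t \<longrightarrow> Q x t"
    proof (cases b)
      case True
      show ?thesis
      proof (cases "y i j = Y (i - 1) j")
        case tie: True
        show ?thesis
        proof (intro exI[of _ 1] conjI allI impI)
          fix z assume "B 1 z"
          then have "z \<in> ?L" unfolding B_def by simp
          then have "z i j = ext n lam z (i - 1) j" using aff_eqs[of z] c tie by (auto simp: canon_def)
          then show "Q x z" unfolding Q_def x using True by simp
        qed simp
      next
        case False
        then have s: "Y (i - 1) j < y i j" using gz_lo[OF c] by simp
        show ?thesis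
        proof (intro exI[of _ "(y i j - Y (i - 1) j) / 2"] conjI allI impI)
          fix z assume "B ((y i j - Y (i - 1) j) / 2) z"
          then have cl: "\<forall>i' j'. \<bar>z i' j' - y i' j'\<bar> < (y i j - Y (i - 1) j) / 2" unfolding B_def by simp
          have "\<bar>ext n lam z (i - 1) j - Y (i - 1) j\<bar> < (y i j - Y (i - 1) j) / 2"
            using ext_close[OF _ cl] s by simp
          moreover have "\<bar>z i j - y i j\<bar> < (y i j - Y (i - 1) j) / 2" using cl by blast
          ultimately have "ext n lam z (i - 1) j \<le> z i j" by (rule close_ineq)
          then show "Q x z" unfolding Q_def x using True by simp
        qed (use s in simp)
      qed
    next
      case False
      show ?thesis
      proof (cases "y i j = Y (i - 1) (j + 1)")
        case tie: True
        show ?thesis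
        proof (intro exI[of _ 1] conjI allI impI)
          fix z assume "B 1 z"
          then have "z \<in> ?L" unfolding B_def by simp
          then have "z i j = ext n lam z (i - 1) (j + 1)" using aff_eqs[of z] c tie by (auto simp: canon_def)
          then show "Q x z" unfolding Q_def x using False by simp
        qed simp
      next
        case nt: False
        then have s: "y i j < Y (i - 1) (j + 1)" using gz_hi[OF c] by simp
        show ?thesis
        proof (intro exI[of _ "(Y (i - 1) (j + 1) - y i j) / 2"] conjI allI impI)
          fix z assume "B ((Y (i - 1) (j + 1) - y i j) / 2) z"
          then have cl: "\<forall>i' j'. \<bar>z i' j' - y i' j'\<bar> < (Y (i - 1) (j + 1) - y i j) / 2" unfolding B_def by simp
          have "\<bar>ext n lam z (i - 1) (j + 1) - Y (i - 1) (j + 1)\<bar> < (Y (i - 1) (j + 1) - y i j) / 2"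
            using ext_close[OF _ cl] s by simp
          moreover have "\<bar>z i j - y i j\<bar> < (Y (i - 1) (j + 1) - y i j) / 2" using cl by blast
          ultimately have "z i j \<le> ext n lam z (i - 1) (j + 1)" by (rule close_ineq2)
          then show "Q x z" unfolding Q_def x using False by simp
        qed (use s in simp)
      qed
    qed
  qed
  moreover have "\<And>e e' t. e \<le> e' \<Longrightarrow> B e t \<Longrightarrow> B e' t" unfolding B_def by (meson less_le_trans)
  ultimately obtain e where e: "e > 0" "\<forall>t. B e t \<longrightarrow> (\<forall>x\<in>D. Q x t)" using fin_eps[OF fD] by blast
  have "\<forall>z\<in>?L. (\<forall>i j. \<bar>z i j - y i j\<bar> < e) \<longrightarrow> z \<in> GZ n lam \<inter> ?L"
  proof (intro ballI impI)
    fix z assume zL: "z \<in> ?L" and cl: "\<forall>i j. \<bar>z i j - y i j\<bar> < e"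
    then have q: "\<forall>x\<in>D. Q x z" using e unfolding B_def by blast
    have "z \<in> pts n" using aff_eqs[OF zL] by blast
    moreover have "\<forall>i j. coord_dom n i j \<longrightarrow> ext n lam z (i - 1) j \<le> z i j \<and> z i j \<le> ext n lam z (i - 1) (j + 1)"
    proof (intro allI impI)
      fix i j assume "coord_dom n i j"
      then have "((i, j), True) \<in> D" "((i, j), False) \<in> D" unfolding D_def by auto
      then show "ext n lam z (i - 1) j \<le> z i j \<and> z i j \<le> ext n lam z (i - 1) (j + 1)"
        using q unfolding Q_def by fastforce
    qed
    ultimately show "z \<in> GZ n lam \<inter> ?L" using zL unfolding GZ_def by blast
  qed
  then show ?thesis unfolding cell_def Let_def rel_int_in_def using canon_hat yL yGZ e(1) by blast
qed

end


lemma strict_pert: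
  assumes "a < (b::real)"
  shows "\<exists>d>0. \<forall>e. \<bar>e\<bar> < d \<longrightarrow> a + e * x < b + e * w"
proof -
  define d where "d = (b - a) / (\<bar>x\<bar> + \<bar>w\<bar> + 1)"
  have pos: "\<bar>x\<bar> + \<bar>w\<bar> + 1 > 0" by simp
  have "d > 0" unfolding d_def using assms pos by simp
  moreover have "\<forall>e. \<bar>e\<bar> < d \<longrightarrow> a + e * x < b + e * w"
  proof (intro allI impI)
    fix e assume h: "\<bar>e\<bar> < d"
    have "\<bar>e\<bar> * (\<bar>x\<bar> + \<bar>w\<bar> + 1) < b - a"
      using h pos unfolding d_def by (simp add: pos_less_divide_eq)
    moreover have "e * x - e * w \<le> \<bar>e\<bar> * (\<bar>x\<bar> + \<bar>w\<bar>)"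
    proof -
      have "e * x - e * w \<le> \<bar>e * x - e * w\<bar>" by simp
      also have "\<dots> \<le> \<bar>e * x\<bar> + \<bar>e * w\<bar>" by (rule abs_triangle_ineq4)
      also have "\<dots> = \<bar>e\<bar> * (\<bar>x\<bar> + \<bar>w\<bar>)" by (simp add: abs_mult algebra_simps)
      finally show ?thesis .
    qed
    moreover have "\<bar>e\<bar> * (\<bar>x\<bar> + \<bar>w\<bar>) \<le> \<bar>e\<bar> * (\<bar>x\<bar> + \<bar>w\<bar> + 1)" by (rule mult_left_mono) auto
    ultimately show "a + e * x < b + e * w" by linarith
  qed
  ultimately show ?thesis by blast
qed

locale gzP = gzs +
  fixes P :: epat
  assumes enh: "enhanced_GZ n lam P"
      and ycell: "y \<in> cell n lam P"
begin

abbreviation "a \<equiv> ent P"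

lemma hat: "y \<in> cell_hat n lam P"
  using ycell unfolding cell_def Let_def by blast

lemma relint: "\<exists>e>0. \<forall>z\<in>aff_span (cell_hat n lam P). (\<forall>i j. \<bar>z i j - y i j\<bar> < e) \<longrightarrow> z \<in> GZ n lam"
  using ycell unfolding cell_def Let_def rel_int_in_def by blast

lemmas E_all = enh[unfolded enhanced_GZ_def Let_def]
lemma E_gzp: "GZ_pattern n lam a" using E_all[THEN conjunct1] .
lemma E_out: "\<not> pat_dom n i j \<Longrightarrow> a i j = 0" using E_gzp unfolding GZ_pattern_def by blast
lemma E_row0: "1 \<le> j \<Longrightarrow> j \<le> n \<Longrightarrow> a 0 j = lam (n + 1 - j)" using E_gzp unfolding GZ_pattern_def by blast
lemma E_bnd: "1 \<le> i \<Longrightarrow> pat_dom n i j \<Longrightarrow> a (i - 1) j \<le> a i j \<and> a i j \<le> a (i - 1) (j + 1)"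
  using E_gzp unfolding GZ_pattern_def by blast
lemma E_circ_out: "\<not> pat_dom n i j \<Longrightarrow> \<not> circ P i j" using E_all[THEN conjunct2, THEN conjunct1] by blast
lemma E_edge_out: "\<not> (1 \<le> i \<and> pat_dom n i j) \<Longrightarrow> \<not> jl P i j \<and> \<not> jr P i j"
  using E_all[THEN conjunct2, THEN conjunct2, THEN conjunct1] by blast
lemma E1: "pat_dom n 0 j \<Longrightarrow> circ P 0 j" using E_all[THEN conjunct2, THEN conjunct2, THEN conjunct2, THEN conjunct1] by blast
lemma E2l: "jl P i j \<Longrightarrow> a i j = a (i - 1) j \<and> circ P i j" using E_all[THEN conjunct2, THEN conjunct2, THEN conjunct2, THEN conjunct2, THEN conjunct1] by blast
lemma E2r: "jr P i j \<Longrightarrow> a i j = a (i - 1) (j + 1) \<and> circ P i j" using E_all[THEN conjunct2, THEN conjunct2, THEN conjunct2, THEN conjunct2, THEN conjunct2, THEN conjunct1] by blast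
lemma E3: "1 \<le> i \<Longrightarrow> pat_dom n i (j + 1) \<Longrightarrow> 1 \<le> j \<Longrightarrow>
        ((jr P i j \<and> jl P i (j + 1)) \<longleftrightarrow> (jl P (i + 1) j \<and> jr P (i + 1) j))"
  using E_all[THEN conjunct2, THEN conjunct2, THEN conjunct2, THEN conjunct2, THEN conjunct2, THEN conjunct2, THEN conjunct1] by blast
lemma E4: "1 \<le> j \<Longrightarrow> j + 1 \<le> n \<Longrightarrow> a 0 j = a 0 (j + 1) \<Longrightarrow> circ P 1 j \<and> jl P 1 j \<and> jr P 1 j"
  using E_all[THEN conjunct2, THEN conjunct2, THEN conjunct2, THEN conjunct2, THEN conjunct2, THEN conjunct2, THEN conjunct2, THEN conjunct1] by blast
lemma E5: "1 \<le> i \<Longrightarrow> pat_dom n i j \<Longrightarrow> a (i - 1) j < a (i - 1) (j + 1) \<Longrightarrow> a i j = a (i - 1) j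
        \<Longrightarrow> circ P i j \<and> jl P i j"
  using E_all[THEN conjunct2, THEN conjunct2, THEN conjunct2, THEN conjunct2, THEN conjunct2, THEN conjunct2, THEN conjunct2, THEN conjunct2, THEN conjunct1] by blast
lemma E6: "1 \<le> i \<Longrightarrow> pat_dom n i j \<Longrightarrow> a (i - 1) j < a (i - 1) (j + 1) \<Longrightarrow>
        a i j = a (i - 1) (j + 1) \<Longrightarrow> circ P i j \<Longrightarrow> jr P i j"
  using E_all[THEN conjunct2, THEN conjunct2, THEN conjunct2, THEN conjunct2, THEN conjunct2, THEN conjunct2, THEN conjunct2, THEN conjunct2, THEN conjunct2, THEN conjunct1] by blast
lemma E8: "1 \<le> i \<Longrightarrow> pat_dom n i j \<Longrightarrow> a (i - 1) j = a (i - 1) (j + 1) \<Longrightarrow> a i j = a (i - 1) j \<Longrightarrow>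
        circ P i j \<Longrightarrow> jl P i j \<or> jr P i j"
  using E_all[THEN conjunct2, THEN conjunct2, THEN conjunct2, THEN conjunct2, THEN conjunct2, THEN conjunct2, THEN conjunct2, THEN conjunct2, THEN conjunct2, THEN conjunct2, THEN conjunct2] by blast

lemmas H_all = hat[unfolded cell_hat_def Let_def mem_Collect_eq, THEN conjunct2]
lemma H_body: "coord_dom n i j \<Longrightarrow> (jl P i j \<longrightarrow> y i j = Y (i - 1) j) \<and>
      (jr P i j \<longrightarrow> y i j = Y (i - 1) (j + 1)) \<and>
      (\<not> jl P i j \<and> \<not> jr P i j \<and> circ P i j \<longrightarrow> y i j = real_of_int (a i j)) \<and>
      (\<not> jl P i j \<and> \<not> jr P i j \<and> \<not> circ P i j \<longrightarrow>
         (if 2 \<le> a i j - a (i - 1) j then real_of_int (a i j) - 1 < y i j else Y (i - 1) j < y i j) \<and>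
         (if a (i - 1) (j + 1) = a i j then y i j < Y (i - 1) (j + 1) else y i j < real_of_int (a i j)))"
  using H_all by blast

lemma H_l: "coord_dom n i j \<Longrightarrow> jl P i j \<Longrightarrow> y i j = Y (i - 1) j"
  using H_body by blast
lemma H_r: "coord_dom n i j \<Longrightarrow> jr P i j \<Longrightarrow> y i j = Y (i - 1) (j + 1)"
  using H_body by blast
lemma H_c: "coord_dom n i j \<Longrightarrow> \<not> jl P i j \<Longrightarrow> \<not> jr P i j \<Longrightarrow> circ P i j \<Longrightarrow> y i j = real_of_int (a i j)"
  using H_body by blast
lemma H_o: "coord_dom n i j \<Longrightarrow> \<not> jl P i j \<Longrightarrow> \<not> jr P i j \<Longrightarrow> \<not> circ P i j \<Longrightarrow>
    (if 2 \<le> a i j - a (i - 1) j then real_of_int (a i j) - 1 < y i j else Y (i - 1) j < y i j) \<and>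
    (if a (i - 1) (j + 1) = a i j then y i j < Y (i - 1) (j + 1) else y i j < real_of_int (a i j))"
  using H_body by blast

lemma U0: "\<forall>j. pat_dom n i j \<longrightarrow> Y i j \<le> real_of_int (a i j)"
proof (induction i)
  case 0
  then show ?case using E_row0 by (auto simp: pat_dom_def ext_def)
next
  case (Suc k)
  show ?case
  proof (intro allI impI)
    fix j assume pd: "pat_dom n (Suc k) j"
    then have c: "coord_dom n (Suc k) j" by (simp add: pat_dom_def coord_dom_def)
    note cs = coord_Suc[OF c]
    show "Y (Suc k) j \<le> real_of_int (a (Suc k) j)"
    proof (cases "jl P (Suc k) j")
      case True then show ?thesis using H_l[OF c] E2l Suc.IH cs by (simp add: ext_def)
    next
      case nl: False
      show ?thesis
      proof (cases "jr P (Suc k) j")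
        case True then show ?thesis using H_r[OF c] E2r Suc.IH cs by (simp add: ext_def)
      next
        case nr: False
        show ?thesis
        proof (cases "circ P (Suc k) j")
          case True then show ?thesis using H_c[OF c nl nr] by (simp add: ext_def)
        next
          case False
          have "Y k (j + 1) \<le> real_of_int (a k (j + 1))" using Suc.IH cs by blast
          then show ?thesis using H_o[OF c nl nr False] by (auto simp: ext_def split: if_splits)
        qed
      qed
    qed
  qed
qed

lemma Y_le_a: "pat_dom n i j \<Longrightarrow> Y i j \<le> real_of_int (a i j)"
  using U0 by blast

end


context gzP begin

definition bodyA :: "(nat \<Rightarrow> nat \<Rightarrow> real) \<Rightarrow> nat \<Rightarrow> nat \<Rightarrow> bool" where
  "bodyA z i j \<longleftrightarrow> (jl P i j \<longrightarrow> z i j = ext n lam z (i - 1) j) \<and>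
      (jr P i j \<longrightarrow> z i j = ext n lam z (i - 1) (j + 1)) \<and>
      (\<not> jl P i j \<and> \<not> jr P i j \<and> circ P i j \<longrightarrow> z i j = real_of_int (a i j)) \<and>
      (\<not> jl P i j \<and> \<not> jr P i j \<and> \<not> circ P i j \<longrightarrow>
         (if 2 \<le> a i j - a (i - 1) j then real_of_int (a i j) - 1 < z i j else ext n lam z (i - 1) j < z i j))"

definition bodyB :: "(nat \<Rightarrow> nat \<Rightarrow> real) \<Rightarrow> nat \<Rightarrow> nat \<Rightarrow> bool" where
  "bodyB z i j \<longleftrightarrow> (\<not> jl P i j \<and> \<not> jr P i j \<and> \<not> circ P i j \<longrightarrow>
         (if a (i - 1) (j + 1) = a i j then z i j < ext n lam z (i - 1) (j + 1) else z i j < real_of_int (a i j)))"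

lemma cell_hat_iff: "z \<in> cell_hat n lam P \<longleftrightarrow> z \<in> pts n \<and> (\<forall>i j. coord_dom n i j \<longrightarrow> bodyA z i j \<and> bodyB z i j)"
  unfolding cell_hat_def Let_def bodyA_def bodyB_def mem_Collect_eq by blast

definition DD :: "int \<Rightarrow> real \<Rightarrow> nat \<Rightarrow> nat \<Rightarrow> bool" where
  "DD Ai v i j \<longleftrightarrow> coord_dom n i j \<and> y i j = v \<and> a i j = Ai"

definition dd :: "int \<Rightarrow> real \<Rightarrow> nat \<Rightarrow> nat \<Rightarrow> real" where
  "dd Ai v i j = (if DD Ai v i j then 1 else 0)"

definition zz :: "int \<Rightarrow> real \<Rightarrow> real \<Rightarrow> nat \<Rightarrow> nat \<Rightarrow> real" where
  "zz Ai v t = (\<lambda>i j. y i j + t * dd Ai v i j)"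

lemma ext_zz: "ext n lam (zz Ai v t) p q = Y p q + t * dd Ai v p q"
  by (simp add: ext_def zz_def dd_def DD_def coord_dom_def)

lemma zz_pts: "zz Ai v t \<in> pts n"
  using y_pts by (simp add: pts_def zz_def dd_def DD_def)

lemma DD_l:
  assumes ne: "real_of_int Ai \<noteq> v" and c: "coord_dom n i j" and e: "a i j = a (i - 1) j" and t: "y i j = Y (i - 1) j"
  shows "DD Ai v i j = DD Ai v (i - 1) j"
proof (cases "i = 1")
  case True
  have "Y 0 j = real_of_int (a 0 j)" using E_row0 c by (simp add: ext_def coord_dom_def)
  then have "\<not> DD Ai v i j" using True e t ne by (auto simp: DD_def)
  moreover have "\<not> DD Ai v (i - 1) j" using True by (simp add: DD_def coord_dom_def)
  ultimately show ?thesis by simp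
next
  case False
  then have "coord_dom n (i - 1) j" "Y (i - 1) j = y (i - 1) j" using c by (auto simp: coord_dom_def ext_def)
  then show ?thesis using c e t by (auto simp: DD_def)
qed

lemma DD_r:
  assumes ne: "real_of_int Ai \<noteq> v" and c: "coord_dom n i j" and e: "a i j = a (i - 1) (j + 1)" and t: "y i j = Y (i - 1) (j + 1)"
  shows "DD Ai v i j = DD Ai v (i - 1) (j + 1)"
proof (cases "i = 1")
  case True
  have "Y 0 (j + 1) = real_of_int (a 0 (j + 1))" using E_row0 c True by (simp add: ext_def coord_dom_def)
  then have "\<not> DD Ai v i j" using True e t ne by (auto simp: DD_def)
  moreover have "\<not> DD Ai v (i - 1) (j + 1)" using True by (simp add: DD_def coord_dom_def)
  ultimately show ?thesis by simp
next
  case False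
  then have "coord_dom n (i - 1) (j + 1)" "Y (i - 1) (j + 1) = y (i - 1) (j + 1)" using c by (auto simp: coord_dom_def ext_def)
  then show ?thesis using c e t by (auto simp: DD_def)
qed

lemma zz_hat:
  assumes ne: "real_of_int Ai \<noteq> v"
  shows "\<exists>d>0. \<forall>t. \<bar>t\<bar> < d \<longrightarrow> zz Ai v t \<in> cell_hat n lam P"
proof -
  define D where "D = {(i, j). coord_dom n i j} \<times> (UNIV :: bool set)"
  have fD: "finite D" unfolding D_def using finite_coord by simp
  define Q where "Q = (\<lambda>(x :: (nat \<times> nat) \<times> bool) t. case x of ((i, j), b) \<Rightarrow>
     (if b then bodyA (zz Ai v t) i j else bodyB (zz Ai v t) i j))"
  have "\<forall>x\<in>D. \<exists>d>0. \<forall>t. \<bar>t\<bar> < d \<longrightarrow> Q x t"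
  proof
    fix x assume "x \<in> D"
    then obtain i j b where x: "x = ((i, j), b)" and c: "coord_dom n i j" unfolding D_def by auto
    let ?d = "dd Ai v"
    have exact: "\<forall>t. (jl P i j \<longrightarrow> zz Ai v t i j = ext n lam (zz Ai v t) (i - 1) j) \<and>
      (jr P i j \<longrightarrow> zz Ai v t i j = ext n lam (zz Ai v t) (i - 1) (j + 1)) \<and>
      (\<not> jl P i j \<and> \<not> jr P i j \<and> circ P i j \<longrightarrow> zz Ai v t i j = real_of_int (a i j))"
    proof (intro allI conjI impI)
      fix t
      assume l: "jl P i j"
      have "DD Ai v i j = DD Ai v (i - 1) j" using DD_l[OF ne c] E2l[OF l] H_l[OF c l] by blast
      then show "zz Ai v t i j = ext n lam (zz Ai v t) (i - 1) j" using H_l[OF c l]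
        unfolding ext_zz by (simp add: zz_def dd_def)
    next
      fix t
      assume r: "jr P i j"
      have "DD Ai v i j = DD Ai v (i - 1) (j + 1)" using DD_r[OF ne c] E2r[OF r] H_r[OF c r] by blast
      then show "zz Ai v t i j = ext n lam (zz Ai v t) (i - 1) (j + 1)" using H_r[OF c r]
        unfolding ext_zz by (simp add: zz_def dd_def)
    next
      fix t
      assume h: "\<not> jl P i j \<and> \<not> jr P i j \<and> circ P i j"
      then have yc: "y i j = real_of_int (a i j)" using H_c[OF c] by blast
      then have "\<not> DD Ai v i j" using ne by (auto simp: DD_def)
      then show "zz Ai v t i j = real_of_int (a i j)" using yc by (simp add: zz_def dd_def)
    qed
    show "\<exists>d>0. \<forall>t. \<bar>t\<bar> < d \<longrightarrow> Q x t"
    proof (cases "\<not> jl P i j \<and> \<not> jr P i j \<and> \<not> circ P i j")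
      case False
      then show ?thesis using exact unfolding Q_def x bodyA_def bodyB_def
        by (intro exI[of _ 1]) auto
    next
      case op: True
      note ho = H_o[OF c op[THEN conjunct1] op[THEN conjunct2, THEN conjunct1] op[THEN conjunct2, THEN conjunct2]]
      show ?thesis
      proof (cases b)
        case True
        have "\<exists>d>0. \<forall>t. \<bar>t\<bar> < d \<longrightarrow>
           (if 2 \<le> a i j - a (i - 1) j then real_of_int (a i j) - 1 < zz Ai v t i j else ext n lam (zz Ai v t) (i - 1) j < zz Ai v t i j)"
        proof (cases "2 \<le> a i j - a (i - 1) j")
          case True
          then have "real_of_int (a i j) - 1 < y i j" using ho by simp
          from strict_pert[OF this, of 0 "?d i j"] obtain d where "d > 0"
            "\<forall>t. \<bar>t\<bar> < d \<longrightarrow> real_of_int (a i j) - 1 + t * 0 < y i j + t * ?d i j" by blast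
          then show ?thesis using True by (intro exI[of _ d]) (simp add: zz_def)
        next
          case False
          then have "Y (i - 1) j < y i j" using ho by simp
          from strict_pert[OF this, of "?d (i - 1) j" "?d i j"] obtain d where "d > 0"
            "\<forall>t. \<bar>t\<bar> < d \<longrightarrow> Y (i - 1) j + t * ?d (i - 1) j < y i j + t * ?d i j" by blast
          then show ?thesis using False unfolding ext_zz by (intro exI[of _ d]) (simp add: zz_def)
        qed
        then obtain d where d: "d > 0" "\<forall>t. \<bar>t\<bar> < d \<longrightarrow>
           (if 2 \<le> a i j - a (i - 1) j then real_of_int (a i j) - 1 < zz Ai v t i j else ext n lam (zz Ai v t) (i - 1) j < zz Ai v t i j)"
          by blast
        show ?thesis
          using d exact True unfolding Q_def x bodyA_def by (intro exI[of _ d]) auto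
      next
        case False
        have "\<exists>d>0. \<forall>t. \<bar>t\<bar> < d \<longrightarrow>
           (if a (i - 1) (j + 1) = a i j then zz Ai v t i j < ext n lam (zz Ai v t) (i - 1) (j + 1) else zz Ai v t i j < real_of_int (a i j))"
        proof (cases "a (i - 1) (j + 1) = a i j")
          case True
          then have "y i j < Y (i - 1) (j + 1)" using ho by simp
          from strict_pert[OF this, of "?d i j" "?d (i - 1) (j + 1)"] obtain d where "d > 0"
            "\<forall>t. \<bar>t\<bar> < d \<longrightarrow> y i j + t * ?d i j < Y (i - 1) (j + 1) + t * ?d (i - 1) (j + 1)" by blast
          then show ?thesis using True unfolding ext_zz by (intro exI[of _ d]) (simp add: zz_def)
        next
          case False
          then have "y i j < real_of_int (a i j)" using ho by simp
          from strict_pert[OF this, of "?d i j" 0] obtain d where "d > 0"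
            "\<forall>t. \<bar>t\<bar> < d \<longrightarrow> y i j + t * ?d i j < real_of_int (a i j) + t * 0" by blast
          then show ?thesis using False by (intro exI[of _ d]) (simp add: zz_def)
        qed
        then obtain d where d: "d > 0" "\<forall>t. \<bar>t\<bar> < d \<longrightarrow>
           (if a (i - 1) (j + 1) = a i j then zz Ai v t i j < ext n lam (zz Ai v t) (i - 1) (j + 1) else zz Ai v t i j < real_of_int (a i j))"
          by blast
        show ?thesis
          using d False unfolding Q_def x bodyB_def by (intro exI[of _ d]) auto
      qed
    qed
  qed
  moreover have "\<And>e e' t. e \<le> e' \<Longrightarrow> \<bar>t\<bar> < e \<Longrightarrow> \<bar>t\<bar> < (e'::real)" by simp
  ultimately obtain d where d: "d > 0" "\<forall>t. \<bar>t\<bar> < d \<longrightarrow> (\<forall>x\<in>D. Q x t)"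
    using fin_eps[OF fD, of "\<lambda>e t. \<bar>t\<bar> < e" Q] by blast
  show ?thesis
  proof (intro exI[of _ d] conjI allI impI)
    fix t :: real assume "\<bar>t\<bar> < d"
    then have q: "\<forall>x\<in>D. Q x t" using d by blast
    have "\<forall>i j. coord_dom n i j \<longrightarrow> bodyA (zz Ai v t) i j \<and> bodyB (zz Ai v t) i j"
    proof (intro allI impI)
      fix i j assume "coord_dom n i j"
      then have "((i, j), True) \<in> D" "((i, j), False) \<in> D" unfolding D_def by auto
      then show "bodyA (zz Ai v t) i j \<and> bodyB (zz Ai v t) i j" using q unfolding Q_def by fastforce
    qed
    then show "zz Ai v t \<in> cell_hat n lam P" using cell_hat_iff zz_pts by blast
  qed (use d in simp)
qed

end


context gzP begin

lemma zz_GZ: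
  assumes ne: "real_of_int Ai \<noteq> v"
  shows "\<exists>d>0. \<forall>t. \<bar>t\<bar> < d \<longrightarrow> zz Ai v t \<in> GZ n lam"
proof -
  obtain d where d: "d > 0" "\<forall>t. \<bar>t\<bar> < d \<longrightarrow> zz Ai v t \<in> cell_hat n lam P" using zz_hat[OF ne] by blast
  obtain e where e: "e > 0" "\<forall>z\<in>aff_span (cell_hat n lam P). (\<forall>i j. \<bar>z i j - y i j\<bar> < e) \<longrightarrow> z \<in> GZ n lam"
    using relint by blast
  show ?thesis
  proof (intro exI[of _ "min d e"] conjI allI impI)
    show "0 < min d e" using d e by simp
    fix t :: real assume t: "\<bar>t\<bar> < min d e"
    then have "zz Ai v t \<in> aff_span (cell_hat n lam P)" using d self_aff by simp
    moreover have "\<forall>i j. \<bar>zz Ai v t i j - y i j\<bar> < e"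
    proof (intro allI)
      fix i j
      have "\<bar>zz Ai v t i j - y i j\<bar> = \<bar>t\<bar> * \<bar>dd Ai v i j\<bar>" by (simp add: zz_def abs_mult)
      also have "\<dots> \<le> \<bar>t\<bar>" by (simp add: dd_def)
      finally show "\<bar>zz Ai v t i j - y i j\<bar> < e" using t by simp
    qed
    ultimately show "zz Ai v t \<in> GZ n lam" using e by blast
  qed
qed

lemma dd_cases: "dd Ai v i j = 0 \<or> dd Ai v i j = 1" by (simp add: dd_def)

lemma pm_eq:
  assumes "d > 0" "\<forall>t. \<bar>t\<bar> < d \<longrightarrow> t * p \<le> t * (q::real)" "p = 0 \<or> p = 1" "q = 0 \<or> q = 1"
  shows "p = q"
proof -
  have "\<bar>d / 2\<bar> < d" "\<bar>- (d / 2)\<bar> < d" using assms(1) by simp_all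
  then have "d / 2 * p \<le> d / 2 * q" "- (d / 2) * p \<le> - (d / 2) * q" using assms(2) by blast+
  then have "p \<le> q" "q \<le> p" using assms(1) by (simp_all add: mult_le_cancel_left)
  then show ?thesis by simp
qed

lemma pert_l:
  assumes ne: "real_of_int Ai \<noteq> v" and c: "coord_dom n i j" and t: "y i j = Y (i - 1) j"
  shows "DD Ai v i j = DD Ai v (i - 1) j"
proof -
  obtain d where d: "d > 0" "\<forall>t. \<bar>t\<bar> < d \<longrightarrow> zz Ai v t \<in> GZ n lam" using zz_GZ[OF ne] by blast
  have "\<forall>t. \<bar>t\<bar> < d \<longrightarrow> t * dd Ai v (i - 1) j \<le> t * dd Ai v i j"
  proof (intro allI impI)
    fix s :: real assume "\<bar>s\<bar> < d"
    then have "zz Ai v s \<in> GZ n lam" using d by blast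
    then have "ext n lam (zz Ai v s) (i - 1) j \<le> zz Ai v s i j" using c unfolding GZ_def by blast
    then show "s * dd Ai v (i - 1) j \<le> s * dd Ai v i j" unfolding ext_zz using t by (simp add: zz_def)
  qed
  then have "dd Ai v (i - 1) j = dd Ai v i j" using pm_eq[OF d(1)] dd_cases by blast
  then show ?thesis by (simp add: dd_def split: if_splits)
qed

lemma pert_r:
  assumes ne: "real_of_int Ai \<noteq> v" and c: "coord_dom n i j" and t: "y i j = Y (i - 1) (j + 1)"
  shows "DD Ai v i j = DD Ai v (i - 1) (j + 1)"
proof -
  obtain d where d: "d > 0" "\<forall>t. \<bar>t\<bar> < d \<longrightarrow> zz Ai v t \<in> GZ n lam" using zz_GZ[OF ne] by blast
  have "\<forall>t. \<bar>t\<bar> < d \<longrightarrow> t * dd Ai v i j \<le> t * dd Ai v (i - 1) (j + 1)"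
  proof (intro allI impI)
    fix s :: real assume "\<bar>s\<bar> < d"
    then have "zz Ai v s \<in> GZ n lam" using d by blast
    then have "zz Ai v s i j \<le> ext n lam (zz Ai v s) (i - 1) (j + 1)" using c unfolding GZ_def by blast
    then show "s * dd Ai v i j \<le> s * dd Ai v (i - 1) (j + 1)" unfolding ext_zz using t by (simp add: zz_def)
  qed
  then have "dd Ai v i j = dd Ai v (i - 1) (j + 1)" using pm_eq[OF d(1)] dd_cases by blast
  then show ?thesis by (simp add: dd_def split: if_splits)
qed

lemma tie_l:
  assumes c: "coord_dom n i j" and t: "y i j = Y (i - 1) j"
  shows "a i j = a (i - 1) j"
proof (rule ccontr)
  assume neq: "a i j \<noteq> a (i - 1) j"
  let ?v = "y i j"
  show False
  proof (cases "real_of_int (a i j) = ?v")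
    case False
    have "DD (a i j) ?v i j" using c by (simp add: DD_def)
    moreover have "\<not> DD (a i j) ?v (i - 1) j" using neq by (simp add: DD_def)
    ultimately show False using pert_l[OF False c t] by simp
  next
    case True
    then have ne: "real_of_int (a (i - 1) j) \<noteq> ?v" using neq by simp
    have "\<not> DD (a (i - 1) j) ?v i j" using neq by (simp add: DD_def)
    moreover have "DD (a (i - 1) j) ?v (i - 1) j"
    proof (cases "i = 1")
      case True
      have "Y 0 j = real_of_int (a 0 j)" using E_row0 c by (simp add: ext_def coord_dom_def)
      then show ?thesis using True t ne by simp
    next
      case False
      then show ?thesis using c t by (auto simp: DD_def coord_dom_def ext_def)
    qed
    ultimately show False using pert_l[OF ne c t] by simp
  qed
qed

lemma tie_r:
  assumes c: "coord_dom n i j" and t: "y i j = Y (i - 1) (j + 1)"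
  shows "a i j = a (i - 1) (j + 1)"
proof (rule ccontr)
  assume neq: "a i j \<noteq> a (i - 1) (j + 1)"
  let ?v = "y i j"
  show False
  proof (cases "real_of_int (a i j) = ?v")
    case False
    have "DD (a i j) ?v i j" using c by (simp add: DD_def)
    moreover have "\<not> DD (a i j) ?v (i - 1) (j + 1)" using neq by (simp add: DD_def)
    ultimately show False using pert_r[OF False c t] by simp
  next
    case True
    then have ne: "real_of_int (a (i - 1) (j + 1)) \<noteq> ?v" using neq by simp
    have "\<not> DD (a (i - 1) (j + 1)) ?v i j" using neq by (simp add: DD_def)
    moreover have "DD (a (i - 1) (j + 1)) ?v (i - 1) (j + 1)"
    proof (cases "i = 1")
      case True
      have "Y 0 (j + 1) = real_of_int (a 0 (j + 1))" using E_row0 c True by (simp add: ext_def coord_dom_def)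
      then show ?thesis using True t ne by simp
    next
      case False
      then show ?thesis using c t by (auto simp: DD_def coord_dom_def ext_def)
    qed
    ultimately show False using pert_r[OF ne c t] by simp
  qed
qed

end


lemma cval_nt:
  assumes "v \<noteq> L" "v \<noteq> R" "\<not> (isint v \<and> real_of_int Al < v)"
  shows "cval L R v Al Ar = (if real_of_int Al + 1 > v then (if Al = Ar then Al else Al + 1) else \<lfloor>v\<rfloor> + 1)"
  unfolding cval_def if_not_P[OF assms(1)] if_not_P[OF assms(2)] if_not_P[OF assms(3)] by (rule refl)

lemma cval_uniq:
  assumes "v \<noteq> L" "v \<noteq> R" "Al \<le> x" "x \<le> Ar" "v < real_of_int x"
    "2 \<le> x - Al \<longrightarrow> real_of_int x - 1 < v" "x = Al \<longrightarrow> Al = Ar"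
  shows "cval L R v Al Ar = x \<and> \<not> (isint v \<and> real_of_int Al < v)"
proof -
  have f1: "real_of_int \<lfloor>v\<rfloor> \<le> v" "v < real_of_int \<lfloor>v\<rfloor> + 1" by linarith+
  have nb3: "\<not> (isint v \<and> real_of_int Al < v)"
  proof
    assume h: "isint v \<and> real_of_int Al < v"
    then have fv: "real_of_int \<lfloor>v\<rfloor> = v" unfolding isint_def by blast
    have "Al < \<lfloor>v\<rfloor>" using h fv by linarith
    moreover have "\<lfloor>v\<rfloor> < x" using fv assms(5) by linarith
    ultimately have "2 \<le> x - Al" by linarith
    then have "real_of_int x - 1 < v" using assms(6) by blast
    then show False using fv \<open>\<lfloor>v\<rfloor> < x\<close> by linarith
  qed
  have "cval L R v Al Ar = x"
  proof (cases "real_of_int Al + 1 > v")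
    case True
    then have c: "cval L R v Al Ar = (if Al = Ar then Al else Al + 1)" using cval_nt[OF assms(1,2) nb3] True by simp
    have "\<not> 2 \<le> x - Al"
    proof
      assume "2 \<le> x - Al"
      then have "real_of_int x - 1 < v" using assms(6) by blast
      moreover have "real_of_int Al + 2 \<le> real_of_int x" using \<open>2 \<le> x - Al\<close> by linarith
      ultimately show False using True by linarith
    qed
    then have "x = Al \<or> x = Al + 1" using assms(3) by linarith
    then show ?thesis using c assms(4,7) by auto
  next
    case False
    then have c: "cval L R v Al Ar = \<lfloor>v\<rfloor> + 1" using cval_nt[OF assms(1,2) nb3] False by simp
    have "real_of_int (Al + 1) < real_of_int x" using False assms(5) by simp
    then have "Al + 1 < x" by (simp only: of_int_less_iff)
    then have "2 \<le> x - Al" by linarith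
    then have "real_of_int x - 1 < v" using assms(6) by blast
    then have "x = \<lfloor>v\<rfloor> + 1" using assms(5) f1 by linarith
    then show ?thesis using c by simp
  qed
  then show ?thesis using nb3 by blast
qed



context gzP begin

lemma E5s: "pat_dom n (Suc k) j \<Longrightarrow> a k j < a k (j + 1) \<Longrightarrow> a (Suc k) j = a k j \<Longrightarrow> circ P (Suc k) j \<and> jl P (Suc k) j"
  using E5[of "Suc k" j] by simp
lemma E8s: "pat_dom n (Suc k) j \<Longrightarrow> a k j = a k (j + 1) \<Longrightarrow> a (Suc k) j = a k j \<Longrightarrow> circ P (Suc k) j \<Longrightarrow> jl P (Suc k) j \<or> jr P (Suc k) j"
  using E8[of "Suc k" j] by simp

lemma any_l:
  assumes c: "coord_dom n i j" and t: "y i j = Y (i - 1) j"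
  shows "jl P i j \<or> jr P i j"
proof (rule ccontr)
  assume "\<not> (jl P i j \<or> jr P i j)"
  then have nl: "\<not> jl P i j" and nr: "\<not> jr P i j" by auto
  have e: "a i j = a (i - 1) j" using tie_l[OF c t] .
  have i1: "1 \<le> i" and pd: "pat_dom n i j" using c by (auto simp: coord_dom_def pat_dom_def)
  show False
  proof (cases "circ P i j")
    case True
    show False
    proof (cases "a (i - 1) j < a (i - 1) (j + 1)")
      case True then show False using E5[OF i1 pd True e] nl by blast
    next
      case False
      then have "a (i - 1) j = a (i - 1) (j + 1)" using E_bnd[OF i1 pd] e by simp
      then show False using E8[OF i1 pd _ e] \<open>circ P i j\<close> nl nr by blast
    qed
  next
    case False
    then show False using H_o[OF c nl nr False] e t by simp
  qed
qed

lemma any_r: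
  assumes c: "coord_dom n i j" and t: "y i j = Y (i - 1) (j + 1)"
  shows "jl P i j \<or> jr P i j"
proof (rule ccontr)
  assume "\<not> (jl P i j \<or> jr P i j)"
  then have nl: "\<not> jl P i j" and nr: "\<not> jr P i j" by auto
  have e: "a i j = a (i - 1) (j + 1)" using tie_r[OF c t] .
  have i1: "1 \<le> i" and pd: "pat_dom n i j" using c by (auto simp: coord_dom_def pat_dom_def)
  show False
  proof (cases "circ P i j")
    case True
    show False
    proof (cases "a (i - 1) j < a (i - 1) (j + 1)")
      case True then show False using E6[OF i1 pd True e] \<open>circ P i j\<close> nr by blast
    next
      case False
      then have eq: "a (i - 1) j = a (i - 1) (j + 1)" using E_bnd[OF i1 pd] e by simp
      then have "a i j = a (i - 1) j" using e by simp
      then show False using E8[OF i1 pd eq] \<open>circ P i j\<close> nl nr by blast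
    qed
  next
    case False
    then show False using H_o[OF c nl nr False] e t by simp
  qed
qed

lemma U2: "\<forall>j. coord_dom n (Suc k) j \<longrightarrow>
   (y (Suc k) j = Y k j \<longrightarrow> jl P (Suc k) j) \<and> (y (Suc k) j = Y k (j + 1) \<longrightarrow> jr P (Suc k) j)"
proof (induction k)
  case 0
  show ?case
  proof (intro allI impI conjI)
    fix j assume c: "coord_dom n (Suc 0) j"
    then have jn: "1 \<le> j" "j + 1 \<le> n" by (auto simp: coord_dom_def)
    have both: "y (Suc 0) j = Y 0 j \<Longrightarrow> y (Suc 0) j = Y 0 (j + 1) \<Longrightarrow> jl P (Suc 0) j \<and> jr P (Suc 0) j"
    proof -
      assume t1: "y (Suc 0) j = Y 0 j" and t2: "y (Suc 0) j = Y 0 (j + 1)"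
      have "Y 0 j = real_of_int (a 0 j)" "Y 0 (j + 1) = real_of_int (a 0 (j + 1))"
        using E_row0[of j] E_row0[of "j + 1"] jn by (simp_all add: ext_def)
      then have "a 0 j = a 0 (j + 1)" using t1 t2 by simp
      then show ?thesis using E4[OF jn] by simp
    qed
    show "y (Suc 0) j = Y 0 j \<Longrightarrow> jl P (Suc 0) j"
    proof -
      assume t1: "y (Suc 0) j = Y 0 j"
      show ?thesis
      proof (cases "y (Suc 0) j = Y 0 (j + 1)")
        case True then show ?thesis using both t1 by blast
      next
        case False then show ?thesis using any_l[OF c] t1 H_r[OF c] by auto
      qed
    qed
    show "y (Suc 0) j = Y 0 (j + 1) \<Longrightarrow> jr P (Suc 0) j"
    proof -
      assume t2: "y (Suc 0) j = Y 0 (j + 1)"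
      show ?thesis
      proof (cases "y (Suc 0) j = Y 0 j")
        case True then show ?thesis using both t2 by blast
      next
        case False then show ?thesis using any_r[OF c] t2 H_l[OF c] by auto
      qed
    qed
  qed
next
  case (Suc m)
  show ?case
  proof (intro allI impI conjI)
    fix j assume c: "coord_dom n (Suc (Suc m)) j"
    note cp = coord_prev[OF c]
    have both: "y (Suc (Suc m)) j = Y (Suc m) j \<Longrightarrow> y (Suc (Suc m)) j = Y (Suc m) (j + 1) \<Longrightarrow>
       jl P (Suc (Suc m)) j \<and> jr P (Suc (Suc m)) j"
    proof -
      assume t1: "y (Suc (Suc m)) j = Y (Suc m) j" and t2: "y (Suc (Suc m)) j = Y (Suc m) (j + 1)"
      have e1: "y (Suc m) j = y (Suc m) (j + 1)" using t1 t2 YSuc by simp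
      have "y (Suc m) j \<le> Y m (j + 1)" using gz_hi[of "Suc m" j] cp by simp
      moreover have "Y m (j + 1) \<le> y (Suc m) (j + 1)" using gz_lo[of "Suc m" "j + 1"] cp by simp
      ultimately have s1: "y (Suc m) j = Y m (j + 1)" and s2: "y (Suc m) (j + 1) = Y m (j + 1)" using e1 by linarith+
      have "jr P (Suc m) j" using Suc.IH cp s1 by blast
      moreover have "jl P (Suc m) (j + 1)" using Suc.IH cp s2 by blast
      moreover have "1 \<le> Suc m" "pat_dom n (Suc m) (j + 1)" "1 \<le> j" using cp by (auto simp: coord_dom_def pat_dom_def)
      ultimately show ?thesis using E3[of "Suc m" j] by simp
    qed
    show "y (Suc (Suc m)) j = Y (Suc m) j \<Longrightarrow> jl P (Suc (Suc m)) j"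
    proof -
      assume t1: "y (Suc (Suc m)) j = Y (Suc m) j"
      show ?thesis
      proof (cases "y (Suc (Suc m)) j = Y (Suc m) (j + 1)")
        case True then show ?thesis using both t1 by blast
      next
        case False then show ?thesis using any_l[OF c] t1 H_r[OF c] by auto
      qed
    qed
    show "y (Suc (Suc m)) j = Y (Suc m) (j + 1) \<Longrightarrow> jr P (Suc (Suc m)) j"
    proof -
      assume t2: "y (Suc (Suc m)) j = Y (Suc m) (j + 1)"
      show ?thesis
      proof (cases "y (Suc (Suc m)) j = Y (Suc m) j")
        case True then show ?thesis using both t2 by blast
      next
        case False then show ?thesis using any_r[OF c] t2 H_l[OF c] by auto
      qed
    qed
  qed
qed

lemma jl_iff: "jl P i j \<longleftrightarrow> coord_dom n i j \<and> y i j = Y (i - 1) j"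
proof (cases "coord_dom n i j")
  case True
  then obtain k where k: "i = Suc k" by (cases i) (auto simp: coord_dom_def)
  then show ?thesis using True U2 H_l by auto
next
  case False
  then show ?thesis using E_edge_out[of i j] by (auto simp: coord_dom_def pat_dom_def)
qed

lemma jr_iff: "jr P i j \<longleftrightarrow> coord_dom n i j \<and> y i j = Y (i - 1) (j + 1)"
proof (cases "coord_dom n i j")
  case True
  then obtain k where k: "i = Suc k" by (cases i) (auto simp: coord_dom_def)
  then show ?thesis using True U2 H_r by auto
next
  case False
  then show ?thesis using E_edge_out[of i j] by (auto simp: coord_dom_def pat_dom_def)
qed

lemma row_step:
  assumes c: "coord_dom n (Suc k) j"
  shows "a (Suc k) j = cval (Y k j) (Y k (j + 1)) (y (Suc k) j) (a k j) (a k (j + 1)) \<and>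
    (circ P (Suc k) j \<longleftrightarrow> (y (Suc k) j = Y k j \<or> y (Suc k) j = Y k (j + 1) \<or>
        (isint (y (Suc k) j) \<and> real_of_int (a k j) < y (Suc k) j)))"
proof -
  let ?v = "y (Suc k) j"
  have i1: "1 \<le> Suc k" and pd: "pat_dom n (Suc k) j" using c by (auto simp: coord_dom_def pat_dom_def)
  note bnd = E_bnd[OF i1 pd, simplified]
  show ?thesis
  proof (cases "?v = Y k j")
    case True
    then have "jl P (Suc k) j" using jl_iff c by simp
    then show ?thesis using E2l True by (simp add: cval_def)
  next
    case nl: False
    show ?thesis
    proof (cases "?v = Y k (j + 1)")
      case True
      then have "jr P (Suc k) j" using jr_iff c by simp
      then show ?thesis using E2r True nl by (simp add: cval_def)
    next
      case nr: False
      have njl: "\<not> jl P (Suc k) j" using jl_iff nl by simp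
      have njr: "\<not> jr P (Suc k) j" using jr_iff nr by simp
      show ?thesis
      proof (cases "circ P (Suc k) j")
        case True
        have yc: "?v = real_of_int (a (Suc k) j)" using H_c[OF c njl njr True] .
        have "a k j \<noteq> a (Suc k) j"
        proof
          assume eq: "a k j = a (Suc k) j"
          show False
          proof (cases "a k j < a k (j + 1)")
            case True then show False using E5s[OF pd True eq[symmetric]] njl by blast
          next
            case False
            then have "a k j = a k (j + 1)" using bnd by simp
            then show False using E8s[OF pd _ eq[symmetric] \<open>circ P (Suc k) j\<close>] njl njr by blast
          qed
        qed
        then have lt: "real_of_int (a k j) < ?v" using bnd yc by simp
        have ii: "isint ?v" using yc unfolding isint_def by simp
        have "cval (Y k j) (Y k (j + 1)) ?v (a k j) (a k (j + 1)) = \<lfloor>?v\<rfloor>" using cval_b3[OF nl nr ii lt] .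
        then show ?thesis using yc ii lt True by simp
      next
        case False
        note ho = H_o[OF c njl njr False, simplified]
        have ya: "Y k (j + 1) \<le> real_of_int (a k (j + 1))" using Y_le_a coord_Suc[OF c] by blast
        have vx: "?v < real_of_int (a (Suc k) j)"
        proof (cases "a k (j + 1) = a (Suc k) j")
          case True then show ?thesis using ho ya by simp
        next
          case False then show ?thesis using ho by simp
        qed
        have l2: "2 \<le> a (Suc k) j - a k j \<longrightarrow> real_of_int (a (Suc k) j) - 1 < ?v" using ho by simp
        have l3: "a (Suc k) j = a k j \<longrightarrow> a k j = a k (j + 1)"
        proof
          assume eq: "a (Suc k) j = a k j"
          show "a k j = a k (j + 1)"
          proof (rule ccontr)
            assume "a k j \<noteq> a k (j + 1)"
            then have "a k j < a k (j + 1)" using bnd by simp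
            then show False using E5s[OF pd _ eq] False by blast
          qed
        qed
        have "cval (Y k j) (Y k (j + 1)) ?v (a k j) (a k (j + 1)) = a (Suc k) j \<and> \<not> (isint ?v \<and> real_of_int (a k j) < ?v)"
          using cval_uniq[OF nl nr _ _ vx l2 l3] bnd by simp
        then show ?thesis using False nl nr by simp
      qed
    qed
  qed
qed

lemma U3: "\<forall>j. a i j = A i j"
proof (induction i)
  case 0
  show ?case
  proof
    fix j show "a 0 j = A 0 j"
    proof (cases "1 \<le> j \<and> j \<le> n")
      case True then show ?thesis using E_row0 by simp
    next
      case False then show ?thesis using E_out[of 0 j] by (auto simp: pat_dom_def)
    qed
  qed
next
  case (Suc k)
  show ?case
  proof
    fix j show "a (Suc k) j = A (Suc k) j"
    proof (cases "pat_dom n (Suc k) j")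
      case True
      then have c: "coord_dom n (Suc k) j" by (simp add: pat_dom_def coord_dom_def)
      show ?thesis using row_step[OF c] A_Suc[OF c] Suc.IH by simp
    next
      case False then show ?thesis using E_out by simp
    qed
  qed
qed

lemma circ_eq: "circ P i j = ccirc n lam y i j"
proof (cases "pat_dom n i j")
  case True
  show ?thesis
  proof (cases i)
    case 0 then show ?thesis using True E1 by (simp add: ccirc_def)
  next
    case (Suc k)
    then have c: "coord_dom n (Suc k) j" using True by (simp add: pat_dom_def coord_dom_def)
    show ?thesis using row_step[OF c] U3 Suc True by (simp add: ccirc_def)
  qed
next
  case False then show ?thesis using E_circ_out by (simp add: ccirc_def)
qed

lemma P_eq: "P = P0"
proof (rule epat.equality)
  show "ent P = ent P0" using U3 by (auto simp: canon_def)
  show "circ P = circ P0" using circ_eq by (auto simp: canon_def)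
  show "jl P = jl P0" using jl_iff by (auto simp: canon_def)
  show "jr P = jr P0" using jr_iff by (auto simp: canon_def)
qed simp

end


theorem lemma5p1:
  fixes n :: nat and lam :: "nat \<Rightarrow> int" and y :: "nat \<Rightarrow> nat \<Rightarrow> real"
  assumes partition: "\<forall>i. 1 \<le> i \<and> i < n \<longrightarrow> lam (i + 1) \<le> lam i"
      and nonneg: "\<forall>i. 1 \<le> i \<and> i \<le> n \<longrightarrow> 0 \<le> lam i"
      and y: "y \<in> GZ n lam"
  shows "\<exists>!P. enhanced_GZ n lam P \<and> y \<in> cell n lam P"
proof -
  interpret gzs n lam y using partition y by unfold_locales
  show ?thesis
  proof (rule ex1I[of _ "canon n lam y"])
    show "enhanced_GZ n lam (canon n lam y) \<and> y \<in> cell n lam (canon n lam y)"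
      using canon_enh canon_cell by blast
  next
    fix P assume h: "enhanced_GZ n lam P \<and> y \<in> cell n lam P"
    interpret gzP n lam y P using h by unfold_locales auto
    show "P = canon n lam y" by (rule P_eq)
  qed
qed

end
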